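(* Let $\Sigma=\{a,b,e\}$ and let $L_1$ be the language of words $w\in\Sigma^*$ such that the word obtained from $w$ by deleting all occurrences of $e$ belongs to $b^+a$. Assuming the prefix-$U_1$ hypothesis, $L_1$ is not tractable.
   Context: For $w=a_1\cdots a_n$, an $L$-infix is a pair $[i,j]$ with $1\le i\le j\le n$ and $a_i\cdots a_j\in L$. $L$ is tractable if there is a data structure, built on an input word $w$, supporting letter substitution updates (replace the $i$-th letter by a given letter) and enumeration queries (output every $L$-infix of the current word exactly once, any order), and a constant $B$ depending only on $L$ such that for every $w$: each update takes at most $B$ steps; during an enumeration query the next $L$-infix (or the conclusion that none remain) is produced within $B$ steps; an enumeration query uses at most $B$ additional memory cells and treats previously existing memory as read-only; building takes at most $B|w|$ steps and memory never exceeds $B|w|$ cells. Model: unit-cost RAM with cell size logarithmic in $|w|$. The prefix-$U_1$ problem asks, for $n\in\mathbb{N}$, for a data structure maintaining a set $S\subseteq\{1,\dots,n\}$ supporting, on input $i\le n$: (1) test whether $i\in S$; (2) insert $i$ into $S$; (3) remove $i$ from $S$; (4) return yes iff $i\le\min S$. The prefix-$U_1$ hypothesis states that no data structure performs all these operations in time independent of $n$ in the unit-cost RAM model with logarithmic cell size. *)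

theory Defs
  imports Main
begin

datatype sym = SA | SB | SE

definition L1 :: "sym list set" where
  "L1 = {w. \<exists>k\<ge>1. filter (\<lambda>x. x \<noteq> SE) w = replicate k SB @ [SA]}"

(* L-infixes [i,j] (1-based, inclusive) of w *)
definition infixes :: "sym list set \<Rightarrow> sym list \<Rightarrow> (nat \<times> nat) set" where
  "infixes L w = {(i, j). 1 \<le> i \<and> i \<le> j \<and> j \<le> length w \<and>
                          take (j - i + 1) (drop (i - 1) w) \<in> L}"

(* Memory cells are addressed by naturals; registers are just memory cells.
   Const a v : M[a] := v
   Add/Sub/Mul/Div a b c : M[a] := M[b] op M[c]  (truncated subtraction, x div 0 = 0)
   Load a b : M[a] := M[M[b]]      Store a b : M[M[a]] := M[b]
   Inp a b : M[a] := input(M[b])    Jz a l : if M[a] = 0 then goto l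
   Out a b : output the pair (M[a], M[b])     Halt *)
datatype instr =
    Const nat nat | Add nat nat nat | Sub nat nat nat | Mul nat nat nat | Div nat nat nat
  | Load nat nat | Store nat nat | Inp nat nat | Jz nat nat | Out nat nat | Halt

type_synonym mem = "nat \<Rightarrow> nat"
type_synonym conf = "nat \<times> mem"

definition halted :: "instr list \<Rightarrow> conf \<Rightarrow> bool" where
  "halted prog c = (length prog \<le> fst c \<or> prog ! fst c = Halt)"

(* writing value v to address a: fails if a is not a writable address or
   the value exceeds the cell capacity cap (logarithmic cell size) *)
definition wr :: "nat set \<Rightarrow> nat \<Rightarrow> nat \<Rightarrow> mem \<Rightarrow> nat \<Rightarrow> nat
                   \<Rightarrow> (conf \<times> (nat \<times> nat) list) option" where
  "wr W cap pc M a v = (if a \<in> W \<and> v < cap then Some ((Suc pc, M(a := v)), []) else None)"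

(* one step; inp = read-only input, cap = cell capacity, W = writable addresses;
   returns the new configuration and the produced outputs, or None on a fault *)
definition step :: "instr list \<Rightarrow> (nat \<Rightarrow> nat) \<Rightarrow> nat \<Rightarrow> nat set \<Rightarrow> conf
                     \<Rightarrow> (conf \<times> (nat \<times> nat) list) option" where
  "step prog inp cap W c = (case c of (pc, M) \<Rightarrow>
     (case prog ! pc of
        Const a v \<Rightarrow> wr W cap pc M a v
      | Add a b d \<Rightarrow> wr W cap pc M a (M b + M d)
      | Sub a b d \<Rightarrow> wr W cap pc M a (M b - M d)
      | Mul a b d \<Rightarrow> wr W cap pc M a (M b * M d)
      | Div a b d \<Rightarrow> wr W cap pc M a (M b div M d)
      | Load a b \<Rightarrow> wr W cap pc M a (M (M b))
      | Store a b \<Rightarrow> wr W cap pc M (M a) (M b)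
      | Inp a b \<Rightarrow> wr W cap pc M a (inp (M b))
      | Jz a l \<Rightarrow> Some ((if M a = 0 then l else Suc pc, M), [])
      | Out a b \<Rightarrow> Some ((Suc pc, M), [(M a, M b)])
      | Halt \<Rightarrow> Some ((pc, M), [])))"

fun steps :: "instr list \<Rightarrow> (nat \<Rightarrow> nat) \<Rightarrow> nat \<Rightarrow> nat set \<Rightarrow> nat \<Rightarrow> conf
               \<Rightarrow> (conf \<times> (nat \<times> nat) list) option" where
  "steps prog inp cap W 0 c = Some (c, [])"
| "steps prog inp cap W (Suc k) c =
     (if halted prog c then Some (c, [])
      else (case step prog inp cap W c of
              None \<Rightarrow> None
            | Some (c', os) \<Rightarrow> (case steps prog inp cap W k c' of
                                   None \<Rightarrow> None
                                 | Some (c'', os') \<Rightarrow> Some (c'', os @ os'))))"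

definition halts_within :: "instr list \<Rightarrow> (nat \<Rightarrow> nat) \<Rightarrow> nat \<Rightarrow> nat set \<Rightarrow> nat
                             \<Rightarrow> conf \<Rightarrow> conf \<Rightarrow> bool" where
  "halts_within prog inp cap W t c c' =
     (\<exists>k\<le>t. \<exists>os. steps prog inp cap W k c = Some (c', os) \<and> halted prog c')"

definition zero_mem :: mem where "zero_mem = (\<lambda>_. 0)"

section \<open>Tractability (dynamic constant-delay enumeration of infixes)\<close>

definition code :: "sym \<Rightarrow> nat" where
  "code x = (case x of SA \<Rightarrow> 1 | SB \<Rightarrow> 2 | SE \<Rightarrow> 3)"

definition word_input :: "sym list \<Rightarrow> nat \<Rightarrow> nat" where
  "word_input w k = (if k = 0 then length w else if k \<le> length w then code (w ! (k - 1)) else 0)"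

definition upd_input :: "nat \<Rightarrow> sym \<Rightarrow> nat \<Rightarrow> nat" where
  "upd_input i a k = (if k = 0 then i else if k = 1 then code a else 0)"

(* cell capacity for words of length n: values < (n+2)^K, i.e. O(log n) bits *)
definition capacity :: "nat \<Rightarrow> nat \<Rightarrow> nat" where
  "capacity K n = (n + 2) ^ K"

definition main_region :: "nat \<Rightarrow> nat \<Rightarrow> nat set" where
  "main_region B n = {..< B * (n + 1)}"

(* the B additional cells available to an enumeration (all other memory read-only) *)
definition scratch_region :: "nat \<Rightarrow> nat \<Rightarrow> nat set" where
  "scratch_region B n = {B * (n + 1) ..< B * (n + 1) + B}"

inductive reach :: "instr list \<Rightarrow> instr list \<Rightarrow> nat \<Rightarrow> nat \<Rightarrow> sym list \<Rightarrow> mem \<Rightarrow> bool"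
  for P U :: "instr list" and B K :: nat where
  init: "halts_within P (word_input w) (capacity K (length w)) (main_region B (length w))
           (B * (length w + 1)) (0, zero_mem) (pc, M) \<Longrightarrow> reach P U B K w M"
| upd: "reach P U B K w M \<Longrightarrow> 1 \<le> i \<Longrightarrow> i \<le> length w \<Longrightarrow>
        halts_within U (upd_input i a) (capacity K (length w)) (main_region B (length w))
           B (0, M) (pc, M') \<Longrightarrow> reach P U B K (w[i - 1 := a]) M'"

(* enumeration on memory M: halts, outputs exactly the set S, each element once,
   with delay at most B between consecutive outputs / start / end *)
definition enum_ok :: "instr list \<Rightarrow> nat \<Rightarrow> nat set \<Rightarrow> nat \<Rightarrow> mem \<Rightarrow> (nat \<times> nat) set \<Rightarrow> bool" where
  "enum_ok E cap W B M S =
     ((\<exists>k c os. steps E (\<lambda>_. 0) cap W k (0, M) = Some (c, os) \<and> halted E c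
                \<and> distinct os \<and> set os = S) \<and>
      (\<forall>k c os. steps E (\<lambda>_. 0) cap W k (0, M) = Some (c, os) \<and> \<not> halted E c \<longrightarrow>
         (\<exists>d. 1 \<le> d \<and> d \<le> B \<and> (\<exists>c' os'. steps E (\<lambda>_. 0) cap W (k + d) (0, M) = Some (c', os')
                  \<and> (length os < length os' \<or> halted E c')))))"

definition tractable :: "sym list set \<Rightarrow> bool" where
  "tractable L = (\<exists>P U E :: instr list. \<exists>B K :: nat.
     (\<forall>w. \<exists>c. halts_within P (word_input w) (capacity K (length w)) (main_region B (length w))
                 (B * (length w + 1)) (0, zero_mem) c) \<and>
     (\<forall>w M i a. reach P U B K w M \<and> 1 \<le> i \<and> i \<le> length w \<longrightarrow>
         (\<exists>c. halts_within U (upd_input i a) (capacity K (length w)) (main_region B (length w))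
                 B (0, M) c)) \<and>
     (\<forall>w M. reach P U B K w M \<longrightarrow>
         enum_ok E (capacity K (length w)) (scratch_region B (length w))
                 B M (infixes L w)))"

definition arg_input :: "nat \<Rightarrow> nat \<Rightarrow> nat" where
  "arg_input x k = (if k = 0 then x else 0)"

inductive su_reach :: "instr list \<Rightarrow> instr list \<Rightarrow> instr list \<Rightarrow> instr list \<Rightarrow> instr list
                        \<Rightarrow> nat \<Rightarrow> nat \<Rightarrow> nat set \<Rightarrow> mem \<Rightarrow> bool"
  for Init T Ins Rem Q :: "instr list" and K n :: nat where
  init: "halts_within Init (arg_input n) (capacity K n) UNIV t (0, zero_mem) (pc, M)
           \<Longrightarrow> su_reach Init T Ins Rem Q K n {} M"
| ins: "su_reach Init T Ins Rem Q K n S M \<Longrightarrow> 1 \<le> i \<Longrightarrow> i \<le> n \<Longrightarrow>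
        halts_within Ins (arg_input i) (capacity K n) UNIV t (0, M) (pc, M')
          \<Longrightarrow> su_reach Init T Ins Rem Q K n (insert i S) M'"
| rem: "su_reach Init T Ins Rem Q K n S M \<Longrightarrow> 1 \<le> i \<Longrightarrow> i \<le> n \<Longrightarrow>
        halts_within Rem (arg_input i) (capacity K n) UNIV t (0, M) (pc, M')
          \<Longrightarrow> su_reach Init T Ins Rem Q K n (S - {i}) M'"
| tst: "su_reach Init T Ins Rem Q K n S M \<Longrightarrow> 1 \<le> i \<Longrightarrow> i \<le> n \<Longrightarrow>
        halts_within T (arg_input i) (capacity K n) UNIV t (0, M) (pc, M')
          \<Longrightarrow> su_reach Init T Ins Rem Q K n S M'"
| qry: "su_reach Init T Ins Rem Q K n S M \<Longrightarrow> 1 \<le> i \<Longrightarrow> i \<le> n \<Longrightarrow>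
        halts_within Q (arg_input i) (capacity K n) UNIV t (0, M) (pc, M')
          \<Longrightarrow> su_reach Init T Ins Rem Q K n S M'"

(* a prefix-U1 data structure whose operations take at most B steps, independently of n;
   answers of test/query are read from memory cell 0 (nonzero = yes) *)
definition prefix_U1_ds :: "instr list \<Rightarrow> instr list \<Rightarrow> instr list \<Rightarrow> instr list \<Rightarrow> instr list
                             \<Rightarrow> nat \<Rightarrow> nat \<Rightarrow> bool" where
  "prefix_U1_ds Init T Ins Rem Q B K =
     ((\<forall>n. \<exists>t c. halts_within Init (arg_input n) (capacity K n) UNIV t (0, zero_mem) c) \<and>
      (\<forall>n S M i. su_reach Init T Ins Rem Q K n S M \<and> 1 \<le> i \<and> i \<le> n \<longrightarrow>
         (\<exists>c. halts_within Ins (arg_input i) (capacity K n) UNIV B (0, M) c) \<and>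
         (\<exists>c. halts_within Rem (arg_input i) (capacity K n) UNIV B (0, M) c) \<and>
         (\<exists>pc M'. halts_within T (arg_input i) (capacity K n) UNIV B (0, M) (pc, M')
                  \<and> (M' 0 \<noteq> 0 \<longleftrightarrow> i \<in> S)) \<and>
         (\<exists>pc M'. halts_within Q (arg_input i) (capacity K n) UNIV B (0, M) (pc, M')
                  \<and> (M' 0 \<noteq> 0 \<longleftrightarrow> (\<forall>s\<in>S. i \<le> s)))))"

definition prefix_U1_hypothesis :: bool where
  "prefix_U1_hypothesis = (\<not> (\<exists>Init T Ins Rem Q B K. prefix_U1_ds Init T Ins Rem Q B K))"

end

theory Submission
  imports Defs
begin

definition runb :: "instr list \<Rightarrow> (nat \<Rightarrow> nat) \<Rightarrow> nat \<Rightarrow> nat set \<Rightarrow> nat \<Rightarrow> conf \<Rightarrow> conf \<Rightarrow> bool" where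
 "runb prog inp cap W n c c' = (\<exists>k\<le>n. \<exists>os. steps prog inp cap W k c = Some (c', os))"

lemma steps_halted: "halted prog c \<Longrightarrow> steps prog inp cap W k c = Some (c, [])"
  by (cases k) auto

lemma steps_add: "steps prog inp cap W (a + b) c = (case steps prog inp cap W a c of None \<Rightarrow> None
   | Some (c1, os1) \<Rightarrow> (case steps prog inp cap W b c1 of None \<Rightarrow> None | Some (c2, os2) \<Rightarrow> Some (c2, os1 @ os2)))"
proof (induction a arbitrary: c)
  case 0 show ?case by (auto split: option.split)
next
  case (Suc a) show ?case
  proof (cases "halted prog c")
    case True thus ?thesis by (simp add: steps_halted)
  next
    case False thus ?thesis by (auto simp: Suc.IH split: option.split prod.split)
  qed
qed

lemma runb_refl: "runb prog inp cap W n c c"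
  unfolding runb_def by (rule exI[of _ 0]) auto

lemma runb_mono: "runb prog inp cap W n c c' \<Longrightarrow> n \<le> m \<Longrightarrow> runb prog inp cap W m c c'"
  unfolding runb_def by (meson order_trans)

lemma runb_trans: "runb prog inp cap W n1 c c1 \<Longrightarrow> runb prog inp cap W n2 c1 c2 \<Longrightarrow> runb prog inp cap W (n1+n2) c c2"
  unfolding runb_def
proof (elim exE conjE)
  fix k1 os1 k2 os2
  assume "k1 \<le> n1" "steps prog inp cap W k1 c = Some (c1, os1)" "k2 \<le> n2" "steps prog inp cap W k2 c1 = Some (c2, os2)"
  thus "\<exists>k\<le>n1 + n2. \<exists>os. steps prog inp cap W k c = Some (c2, os)"
    by (intro exI[of _ "k1+k2"]) (auto simp: steps_add)
qed

lemma runb_stepI: "\<not> halted prog c \<Longrightarrow> (case step prog inp cap W c of Some (c1, _) \<Rightarrow> runb prog inp cap W n c1 c2 | None \<Rightarrow> False)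
   \<Longrightarrow> runb prog inp cap W (Suc n) c c2"
proof -
  assume nh: "\<not> halted prog c" and h: "(case step prog inp cap W c of Some (c1, _) \<Rightarrow> runb prog inp cap W n c1 c2 | None \<Rightarrow> False)"
  then obtain c1 os1 where st: "step prog inp cap W c = Some (c1, os1)" and r: "runb prog inp cap W n c1 c2"
    by (auto split: option.splits)
  from r obtain k os where "k \<le> n" "steps prog inp cap W k c1 = Some (c2, os)" unfolding runb_def by auto
  with nh st show ?thesis unfolding runb_def by (intro exI[of _ "Suc k"]) auto
qed


lemma runb_step1: "\<not> halted prog c \<Longrightarrow> step prog inp cap W c = Some (c1, os) \<Longrightarrow> runb prog inp cap W n c1 c2
   \<Longrightarrow> runb prog inp cap W (Suc n) c c2"
  by (rule runb_stepI) auto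

abbreviation "rAns \<equiv> (0::nat)"
abbreviation "rZ \<equiv> (1::nat)"
abbreviation "rT \<equiv> (2::nat)"
abbreviation "rC \<equiv> (3::nat)"
abbreviation "r1 \<equiv> (4::nat)"
abbreviation "rN \<equiv> (5::nat)"
abbreviation "rA \<equiv> (6::nat)"
abbreviation "rB \<equiv> (7::nat)"
abbreviation "rD \<equiv> (8::nat)"
abbreviation "rF \<equiv> (9::nat)"
abbreviation "rNN \<equiv> (10::nat)"
abbreviation "rI \<equiv> (11::nat)"
abbreviation "rT2 \<equiv> (12::nat)"
abbreviation "rS \<equiv> (13::nat)"

definition fa :: "nat \<Rightarrow> nat" where "fa x = 2 * x + 14"

definition inpf :: "mem \<Rightarrow> nat \<Rightarrow> nat" where
  "inpf M v = (if v = 0 then M rA else if v \<le> M rN then M rB else if v = Suc (M rN) then M rD else 0)"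

definition blk :: "nat \<Rightarrow> nat \<Rightarrow> nat \<Rightarrow> bool \<Rightarrow> (nat \<Rightarrow> nat) \<Rightarrow> instr \<Rightarrow> instr list" where
"blk base nx ex oute tlb ins = (case ins of
   Const a v \<Rightarrow> [Const (fa a) v, Jz rZ nx]
 | Add a b d \<Rightarrow> [Add (fa a) (fa b) (fa d), Jz rZ nx]
 | Sub a b d \<Rightarrow> [Sub (fa a) (fa b) (fa d), Jz rZ nx]
 | Mul a b d \<Rightarrow> [Mul (fa a) (fa b) (fa d), Jz rZ nx]
 | Div a b d \<Rightarrow> [Div (fa a) (fa b) (fa d), Jz rZ nx]
 | Load a b \<Rightarrow> [Add rT (fa b) (fa b), Add rT rT rC, Load (fa a) rT, Jz rZ nx]
 | Store a b \<Rightarrow> [Add rT (fa a) (fa a), Add rT rT rC, Store rT (fa b), Jz rZ nx]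
 | Inp a b \<Rightarrow> [Jz (fa b) (base+7), Sub rT (fa b) rN, Jz rT (base+9), Sub rT rT r1, Jz rT (base+11),
                Const (fa a) 0, Jz rZ nx, Add (fa a) rA rZ, Jz rZ nx, Add (fa a) rB rZ, Jz rZ nx,
                Add (fa a) rD rZ, Jz rZ nx]
 | Jz a l \<Rightarrow> [Jz (fa a) (tlb l), Jz rZ nx]
 | Out a b \<Rightarrow> (if oute then [Const rF 1, Jz rZ ex] else [Jz rZ nx])
 | Halt \<Rightarrow> [Jz rZ ex])"

definition DD :: nat where "DD = 13"

lemma length_blk: "length (blk base nx ex oute tlb ins) \<le> DD"
  by (cases ins) (auto simp: blk_def DD_def)

definition tpc :: "nat \<Rightarrow> nat \<Rightarrow> instr list \<Rightarrow> nat \<Rightarrow> nat" where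
  "tpc off ex orig q = (if q < length orig then off + q * DD else ex)"

definition blkp :: "nat \<Rightarrow> nat \<Rightarrow> bool \<Rightarrow> instr list \<Rightarrow> nat \<Rightarrow> instr list" where
  "blkp off ex oute orig p = blk (off + p * DD) (tpc off ex orig (Suc p)) ex oute (tpc off ex orig) (orig ! p)"

definition trseg :: "nat \<Rightarrow> nat \<Rightarrow> bool \<Rightarrow> instr list \<Rightarrow> instr list" where
  "trseg off ex oute orig = map (\<lambda>q. let bl = blkp off ex oute orig (q div DD) in
      if q mod DD < length bl then bl ! (q mod DD) else Halt) [0..<length orig * DD]"

definition embeds :: "instr list \<Rightarrow> nat \<Rightarrow> nat \<Rightarrow> bool \<Rightarrow> instr list \<Rightarrow> bool" where
  "embeds prog off ex oute orig = (\<forall>p<length orig. \<forall>j<length (blkp off ex oute orig p).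
      off + p * DD + j < length prog \<and> prog ! (off + p * DD + j) = blkp off ex oute orig p ! j)"

lemma length_trseg[simp]: "length (trseg off ex oute orig) = length orig * DD"
  by (simp add: trseg_def)

lemma embeds_app: "embeds (pre @ trseg (length pre) ex oute orig @ post) (length pre) ex oute orig"
  unfolding embeds_def
proof (intro allI impI)
  fix p j assume p: "p < length orig" and j: "j < length (blkp (length pre) ex oute orig p)"
  have jD: "j < DD" using j length_blk[of "length pre + p * DD"] unfolding blkp_def by (meson less_le_trans)
  have q: "p * DD + j < length orig * DD"
  proof -
    have "p * DD + j < Suc p * DD" using jD by simp
    also have "\<dots> \<le> length orig * DD" using p by (intro mult_le_mono1) simp
    finally show ?thesis .
  qed
  show "length pre + p * DD + j < length (pre @ trseg (length pre) ex oute orig @ post) \<and>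
        (pre @ trseg (length pre) ex oute orig @ post) ! (length pre + p * DD + j) = blkp (length pre) ex oute orig p ! j"
  proof
    show "length pre + p * DD + j < length (pre @ trseg (length pre) ex oute orig @ post)" using q by simp
    have "(pre @ trseg (length pre) ex oute orig @ post) ! (length pre + p * DD + j) = trseg (length pre) ex oute orig ! (p * DD + j)"
      using q by (simp add: nth_append add.assoc)
    also have "\<dots> = blkp (length pre) ex oute orig p ! j"
      using q jD j by (simp add: trseg_def Let_def)
    finally show "(pre @ trseg (length pre) ex oute orig @ post) ! (length pre + p * DD + j) = blkp (length pre) ex oute orig p ! j" .
  qed
qed


lemma runb_stepN: "0 < n \<Longrightarrow> \<not> halted prog c \<Longrightarrow> (case step prog inp cap W c of Some (c1, _) \<Rightarrow> runb prog inp cap W (n - 1) c1 c2 | None \<Rightarrow> False)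
   \<Longrightarrow> runb prog inp cap W n c c2"
  using runb_stepI[of prog c inp cap W "n - 1" c2] by simp

lemma runb_eqI: "c = c' \<Longrightarrow> runb prog inp cap W n c c'"
  by (simp add: runb_refl)

definition simrel :: "mem \<Rightarrow> mem \<Rightarrow> bool" where "simrel M M' = (\<forall>x. M' (fa x) = M x)"
definition regok :: "(nat \<Rightarrow> nat) \<Rightarrow> mem \<Rightarrow> bool" where
  "regok inpo M' = (M' rZ = 0 \<and> M' rC = 14 \<and> M' r1 = 1 \<and> (\<forall>v. inpo v = inpf M' v))"
definition frame :: "mem \<Rightarrow> mem \<Rightarrow> bool" where
  "frame M' M2' = (\<forall>a. a \<noteq> rT \<and> (a < 14 \<or> odd a) \<longrightarrow> M2' a = M' a)"
definition frameF :: "mem \<Rightarrow> mem \<Rightarrow> bool" where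
  "frameF M' M2' = (\<forall>a. a \<noteq> rT \<and> a \<noteq> rF \<and> (a < 14 \<or> odd a) \<longrightarrow> M2' a = M' a)"
definition bnd :: "nat \<Rightarrow> mem \<Rightarrow> bool" where "bnd cap M = (\<forall>x. M x < cap)"

lemma frame_refl: "frame M M" by (simp add: frame_def)
lemma frame_trans: "frame M1 M2 \<Longrightarrow> frame M2 M3 \<Longrightarrow> frame M1 M3" by (simp add: frame_def)
lemma regok_frame: "regok inpo M1 \<Longrightarrow> frame M1 M2 \<Longrightarrow> regok inpo M2"
  by (simp add: regok_def frame_def inpf_def)

lemma fa_simps[simp]: "fa x \<noteq> rT" "fa x \<noteq> rF" "fa x \<noteq> rZ" "fa x \<noteq> rC" "fa x \<noteq> r1" "fa x \<noteq> rN"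
   "fa x \<noteq> rA" "fa x \<noteq> rB" "fa x \<noteq> rD" "fa x \<noteq> rAns" "fa x \<noteq> rNN" "fa x \<noteq> rI" "fa x \<noteq> rT2" "fa x \<noteq> rS"
   "(fa x = fa y) = (x = y)" "fa x \<noteq> Suc 0" "Suc 0 \<noteq> fa x"
  by (auto simp: fa_def)

lemma simrel_upd: "simrel M M' \<Longrightarrow> simrel (M(a := v)) (M'(fa a := v))"
  by (simp add: simrel_def)
lemma simrel_updR: "simrel M M' \<Longrightarrow> r < 14 \<Longrightarrow> simrel M (M'(r := v))"
  by (simp add: simrel_def fa_def)
lemma frame_updfa: "frame M1 M2 \<Longrightarrow> frame M1 (M2(fa a := v))"
  by (simp add: frame_def fa_def)
lemma frame_updfa': "frame M1 M2 \<Longrightarrow> even x \<Longrightarrow> 14 \<le> x \<Longrightarrow> frame M1 (M2(x := v))"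
  by (simp add: frame_def)
lemma frame_updT: "frame M1 M2 \<Longrightarrow> frame M1 (M2(rT := v))"
  by (simp add: frame_def)
lemma frame_updF: "frame M1 M2 \<Longrightarrow> frameF M1 (M2(rF := v))"
  by (simp add: frame_def frameF_def)
lemma frame_F: "frame M1 M2 \<Longrightarrow> frameF M1 M2"
  by (simp add: frame_def frameF_def)
lemma bnd_upd: "bnd c M \<Longrightarrow> v < c \<Longrightarrow> bnd c (M(a := v))"
  by (simp add: bnd_def)
lemmas simI = simrel_upd simrel_updR frame_updfa frame_updT frame_refl bnd_upd

lemma even_fa: "even (fa x)" by (simp add: fa_def)
lemma simrel_odd: "simrel M M' \<Longrightarrow> odd y \<Longrightarrow> simrel M (M'(y := v))"
  unfolding simrel_def using even_fa by (metis fun_upd_other)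
lemma fa_odd_neq[simp]: "fa x \<noteq> Suc (fa y)" "fa x \<noteq> fa y + 1"
  using even_fa[of x] even_fa[of y] by auto

lemma fa_back: "2 * x + 14 = fa x" "x + x + 14 = fa x" by (simp_all add: fa_def)

lemma emb_nth: "embeds prog off ex oute orig \<Longrightarrow> p < length orig \<Longrightarrow> off + p * DD \<le> q \<Longrightarrow>
   q < off + p * DD + length (blkp off ex oute orig p) \<Longrightarrow>
   q < length prog \<and> prog ! q = blkp off ex oute orig p ! (q - (off + p * DD))"
  unfolding embeds_def
  by (metis add_diff_inverse_nat less_diff_conv2 not_less add.commute)

lemma sim_step:
  assumes emb: "embeds prog off ex oute orig"
  and nh: "\<not> halted orig (pc, M)"
  and st: "step orig inpo capo Wo (pc, M) = Some ((pc2, M2), os)"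
  and oo: "oute \<longrightarrow> os = []"
  and sr: "simrel M M'" and rg: "regok inpo M'" and bd: "bnd capo M"
  and capb: "\<forall>v<capo. 2 * v + 15 < cap'"
  shows "\<exists>M2'. runb prog inp cap' UNIV DD (tpc off ex orig pc, M') (tpc off ex orig pc2, M2') \<and>
           simrel M2 M2' \<and> frame M' M2' \<and> bnd capo M2"
proof -
  have pc: "pc < length orig" and nhalt: "orig ! pc \<noteq> Halt" using nh by (auto simp: halted_def)
  define base where "base = off + pc * DD"
  define nx where "nx = tpc off ex orig (Suc pc)"
  have tb: "tpc off ex orig pc = base" using pc by (simp add: tpc_def base_def)
  have H: "\<And>q. base \<le> q \<Longrightarrow> q < base + length (blkp off ex oute orig pc) \<Longrightarrow>
      q < length prog \<and> prog ! q = blkp off ex oute orig pc ! (q - base)"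
    using emb_nth[OF emb pc] unfolding base_def by blast
  have bl: "blkp off ex oute orig pc = blk base nx ex oute (tpc off ex orig) (orig ! pc)"
    by (simp add: blkp_def base_def nx_def)
  have sr': "\<And>x. M' (fa x) = M x" using sr by (simp add: simrel_def)
  have rg': "M' rZ = 0" "M' (Suc 0) = 0" "M' rC = 14" "M' r1 = 1" "\<And>v. inpo v = inpf M' v" using rg by (auto simp: regok_def)
  have bd': "\<And>x. M x < capo" using bd by (simp add: bnd_def)
  have cb: "\<And>x. 2 * M x + 15 < cap'" using capb bd' by blast
  have cb2: "\<And>v. v < capo \<Longrightarrow> v < cap'" using capb by force
  note ss = step_def wr_def halted_def sr' rg' cb2 not_le
  show ?thesis
  proof (cases "orig ! pc")
    case (Load a b)
    from st Load have o: "a \<in> Wo" "M (M b) < capo" "pc2 = Suc pc" "M2 = M(a := M (M b))"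
      by (auto simp: step_def wr_def split: if_splits)
    have HH: "\<And>q. base \<le> q \<Longrightarrow> q < base + 4 \<Longrightarrow> q < length prog" "\<And>q. base \<le> q \<Longrightarrow> q < base + 4 \<Longrightarrow> prog ! q = [Add rT (fa b) (fa b), Add rT rT rC, Load (fa a) rT, Jz rZ nx] ! (q - base)"
      using H unfolding bl Load by (simp_all add: blk_def)
    have c1: "2 * M b < cap'" "fa (M b) < cap'" "M b + M b < cap'" using cb[of b] by (auto simp: fa_def)
    let ?M2' = "M'(rT := fa (M b), fa a := M (M b))"
    have "runb prog inp cap' UNIV 4 (base, M') (nx, ?M2')"
      apply (rule runb_stepN, simp, simp add: HH ss, simp add: HH ss c1 fa_back)
      apply (rule runb_stepN, simp, simp add: HH ss, simp add: HH ss c1 fa_back)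
      apply (rule runb_stepN, simp, simp add: HH ss, simp add: HH ss c1 o fa_back)
      apply (rule runb_stepN, simp, simp add: HH ss, simp add: HH ss c1 o fa_back)
      apply (rule runb_eqI) apply (auto simp: fun_eq_iff fa_def)
      done
    then show ?thesis
      apply (intro exI[of _ ?M2'])
      apply (auto simp: tb o nx_def[symmetric] DD_def sr bd intro: runb_mono intro!: simI)
      done
  next
    case (Const a v)
    from st Const have o: "a \<in> Wo" "v < capo" "pc2 = Suc pc" "M2 = M(a := v)"
      by (auto simp: step_def wr_def split: if_splits)
    have HH: "\<And>q. base \<le> q \<Longrightarrow> q < base + 2 \<Longrightarrow> q < length prog" "\<And>q. base \<le> q \<Longrightarrow> q < base + 2 \<Longrightarrow> prog ! q = [Const (fa a) v, Jz rZ nx] ! (q - base)"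
      using H unfolding bl Const by (simp_all add: blk_def)
    let ?M2' = "M'(fa a := v)"
    have "runb prog inp cap' UNIV 2 (base, M') (nx, ?M2')"
      apply (rule runb_stepN, simp, simp add: HH ss, simp add: HH ss o)
      apply (rule runb_stepN, simp, simp add: HH ss, simp add: HH ss o)
      apply (rule runb_eqI) apply (auto simp: fun_eq_iff fa_def)
      done
    then show ?thesis
      apply (intro exI[of _ ?M2'])
      apply (auto simp: tb o nx_def[symmetric] DD_def sr bd intro: runb_mono intro!: simI)
      done
  next
    case (Add a b d)
    from st Add have o: "a \<in> Wo" "M b + M d < capo" "pc2 = Suc pc" "M2 = M(a := M b + M d)"
      by (auto simp: step_def wr_def split: if_splits)
    have HH: "\<And>q. base \<le> q \<Longrightarrow> q < base + 2 \<Longrightarrow> q < length prog" "\<And>q. base \<le> q \<Longrightarrow> q < base + 2 \<Longrightarrow> prog ! q = [Add (fa a) (fa b) (fa d), Jz rZ nx] ! (q - base)"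
      using H unfolding bl Add by (simp_all add: blk_def)
    let ?M2' = "M'(fa a := M b + M d)"
    have "runb prog inp cap' UNIV 2 (base, M') (nx, ?M2')"
      apply (rule runb_stepN, simp, simp add: HH ss, simp add: HH ss o)
      apply (rule runb_stepN, simp, simp add: HH ss, simp add: HH ss o)
      apply (rule runb_eqI) apply (auto simp: fun_eq_iff fa_def)
      done
    then show ?thesis
      apply (intro exI[of _ ?M2'])
      apply (auto simp: tb o nx_def[symmetric] DD_def sr bd intro: runb_mono intro!: simI)
      done
  next
    case (Sub a b d)
    from st Sub have o: "a \<in> Wo" "M b - M d < capo" "pc2 = Suc pc" "M2 = M(a := M b - M d)"
      by (auto simp: step_def wr_def split: if_splits)
    have HH: "\<And>q. base \<le> q \<Longrightarrow> q < base + 2 \<Longrightarrow> q < length prog" "\<And>q. base \<le> q \<Longrightarrow> q < base + 2 \<Longrightarrow> prog ! q = [Sub (fa a) (fa b) (fa d), Jz rZ nx] ! (q - base)"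
      using H unfolding bl Sub by (simp_all add: blk_def)
    let ?M2' = "M'(fa a := M b - M d)"
    have "runb prog inp cap' UNIV 2 (base, M') (nx, ?M2')"
      apply (rule runb_stepN, simp, simp add: HH ss, simp add: HH ss o)
      apply (rule runb_stepN, simp, simp add: HH ss, simp add: HH ss o)
      apply (rule runb_eqI) apply (auto simp: fun_eq_iff fa_def)
      done
    then show ?thesis
      apply (intro exI[of _ ?M2'])
      apply (auto simp: tb o nx_def[symmetric] DD_def sr bd intro: runb_mono intro!: simI)
      done
  next
    case (Mul a b d)
    from st Mul have o: "a \<in> Wo" "M b * M d < capo" "pc2 = Suc pc" "M2 = M(a := M b * M d)"
      by (auto simp: step_def wr_def split: if_splits)
    have HH: "\<And>q. base \<le> q \<Longrightarrow> q < base + 2 \<Longrightarrow> q < length prog" "\<And>q. base \<le> q \<Longrightarrow> q < base + 2 \<Longrightarrow> prog ! q = [Mul (fa a) (fa b) (fa d), Jz rZ nx] ! (q - base)"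
      using H unfolding bl Mul by (simp_all add: blk_def)
    let ?M2' = "M'(fa a := M b * M d)"
    have "runb prog inp cap' UNIV 2 (base, M') (nx, ?M2')"
      apply (rule runb_stepN, simp, simp add: HH ss, simp add: HH ss o)
      apply (rule runb_stepN, simp, simp add: HH ss, simp add: HH ss o)
      apply (rule runb_eqI) apply (auto simp: fun_eq_iff fa_def)
      done
    then show ?thesis
      apply (intro exI[of _ ?M2'])
      apply (auto simp: tb o nx_def[symmetric] DD_def sr bd intro: runb_mono intro!: simI)
      done
  next
    case (Div a b d)
    from st Div have o: "a \<in> Wo" "M b div M d < capo" "pc2 = Suc pc" "M2 = M(a := M b div M d)"
      by (auto simp: step_def wr_def split: if_splits)
    have HH: "\<And>q. base \<le> q \<Longrightarrow> q < base + 2 \<Longrightarrow> q < length prog" "\<And>q. base \<le> q \<Longrightarrow> q < base + 2 \<Longrightarrow> prog ! q = [Div (fa a) (fa b) (fa d), Jz rZ nx] ! (q - base)"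
      using H unfolding bl Div by (simp_all add: blk_def)
    let ?M2' = "M'(fa a := M b div M d)"
    have "runb prog inp cap' UNIV 2 (base, M') (nx, ?M2')"
      apply (rule runb_stepN, simp, simp add: HH ss, simp add: HH ss o)
      apply (rule runb_stepN, simp, simp add: HH ss, simp add: HH ss o)
      apply (rule runb_eqI) apply (auto simp: fun_eq_iff fa_def)
      done
    then show ?thesis
      apply (intro exI[of _ ?M2'])
      apply (auto simp: tb o nx_def[symmetric] DD_def sr bd intro: runb_mono intro!: simI)
      done
  next
    case (Store a b)
    from st Store have o: "M a \<in> Wo" "M b < capo" "pc2 = Suc pc" "M2 = M(M a := M b)"
      by (auto simp: step_def wr_def split: if_splits)
    have HH: "\<And>q. base \<le> q \<Longrightarrow> q < base + 4 \<Longrightarrow> q < length prog" "\<And>q. base \<le> q \<Longrightarrow> q < base + 4 \<Longrightarrow> prog ! q = [Add rT (fa a) (fa a), Add rT rT rC, Store rT (fa b), Jz rZ nx] ! (q - base)"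
      using H unfolding bl Store by (simp_all add: blk_def)
    have c1: "2 * M a < cap'" "fa (M a) < cap'" "M a + M a < cap'" using cb[of a] by (auto simp: fa_def)
    let ?M2' = "M'(rT := fa (M a), fa (M a) := M b)"
    have "runb prog inp cap' UNIV 4 (base, M') (nx, ?M2')"
      apply (rule runb_stepN, simp, simp add: HH ss, simp add: HH ss c1 fa_back)
      apply (rule runb_stepN, simp, simp add: HH ss, simp add: HH ss c1 fa_back)
      apply (rule runb_stepN, simp, simp add: HH ss, simp add: HH ss c1 o fa_back)
      apply (rule runb_stepN, simp, simp add: HH ss, simp add: HH ss c1 o fa_back)
      apply (rule runb_eqI) apply (auto simp: fun_eq_iff fa_def)
      done
    then show ?thesis
      apply (intro exI[of _ ?M2'])
      apply (auto simp: tb o nx_def[symmetric] DD_def sr bd intro: runb_mono intro!: simI)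
      done
  next
    case (Jz a l)
    from st Jz have o: "pc2 = (if M a = 0 then l else Suc pc)" "M2 = M"
      by (auto simp: step_def)
    have HH: "\<And>q. base \<le> q \<Longrightarrow> q < base + 2 \<Longrightarrow> q < length prog" "\<And>q. base \<le> q \<Longrightarrow> q < base + 2 \<Longrightarrow> prog ! q = [Jz (fa a) (tpc off ex orig l), Jz rZ nx] ! (q - base)"
      using H unfolding bl Jz by (simp_all add: blk_def)
    have "runb prog inp cap' UNIV 2 (base, M') (tpc off ex orig pc2, M')"
    proof (cases "M a = 0")
      case True
      show ?thesis
        apply (rule runb_stepN, simp, simp add: HH ss, simp add: HH ss o True)
        apply (rule runb_eqI, simp add: o True)
        done
    next
      case False
      show ?thesis
        apply (rule runb_stepN, simp, simp add: HH ss, simp add: HH ss o False)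
        apply (rule runb_stepN, simp, simp add: HH ss, simp add: HH ss o False)
        apply (rule runb_eqI, simp add: o False nx_def)
        done
    qed
    then show ?thesis
      apply (intro exI[of _ M'])
      apply (auto simp: tb o DD_def sr bd intro: runb_mono intro!: simI)
      done
  next
    case (Out a b)
    from st Out have o: "pc2 = Suc pc" "M2 = M" "os = [(M a, M b)]"
      by (auto simp: step_def)
    with oo have ne: "\<not> oute" by auto
    have HH: "\<And>q. base \<le> q \<Longrightarrow> q < base + 1 \<Longrightarrow> q < length prog" "\<And>q. base \<le> q \<Longrightarrow> q < base + 1 \<Longrightarrow> prog ! q = [Jz rZ nx] ! (q - base)"
      using H unfolding bl Out by (simp_all add: blk_def ne)
    have "runb prog inp cap' UNIV 1 (base, M') (nx, M')"
      apply (rule runb_stepN, simp, simp add: HH ss, simp add: HH ss o)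
      apply (rule runb_eqI, simp)
      done
    then show ?thesis
      apply (intro exI[of _ M'])
      apply (auto simp: tb o nx_def[symmetric] DD_def sr bd intro: runb_mono intro!: simI)
      done
  next
    case (Inp a b)
    from st Inp have o: "a \<in> Wo" "inpf M' (M b) < capo" "pc2 = Suc pc" "M2 = M(a := inpf M' (M b))"
      by (auto simp: step_def wr_def rg' split: if_splits)
    have HH: "\<And>q. base \<le> q \<Longrightarrow> q < base + 13 \<Longrightarrow> q < length prog" "\<And>q. base \<le> q \<Longrightarrow> q < base + 13 \<Longrightarrow> prog ! q =
       [Jz (fa b) (base+7), Sub rT (fa b) rN, Jz rT (base+9), Sub rT rT r1, Jz rT (base+11),
                Const (fa a) 0, Jz rZ nx, Add (fa a) rA rZ, Jz rZ nx, Add (fa a) rB rZ, Jz rZ nx,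
                Add (fa a) rD rZ, Jz rZ nx] ! (q - base)"
      using H unfolding bl Inp by (simp_all add: blk_def)
    have vb: "inpf M' (M b) < cap'" using o cb2 by blast
    have "\<exists>M2'. runb prog inp cap' UNIV 13 (base, M') (nx, M2') \<and> simrel M2 M2' \<and> frame M' M2'"
    proof (cases "M b = 0")
      case True
      let ?M2' = "M'(fa a := inpf M' (M b))"
      have "runb prog inp cap' UNIV 3 (base, M') (nx, ?M2')"
        using vb
        apply (simp add: True inpf_def)
        apply (rule runb_stepN, simp, simp add: HH ss, simp add: HH ss True)
        apply (rule runb_stepN, simp, simp add: HH ss, simp add: HH ss True)
        apply (rule runb_stepN, simp, simp add: HH ss, simp add: HH ss True)
        apply (rule runb_eqI, simp)
        done
      then show ?thesis
        by (intro exI[of _ ?M2']) (auto simp: o sr intro: runb_mono intro!: simI)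
    next
      case F1: False
      show ?thesis
      proof (cases "M b \<le> M' rN")
        case True
        let ?M2' = "M'(rT := M b - M' rN, fa a := inpf M' (M b))"
        have "runb prog inp cap' UNIV 5 (base, M') (nx, ?M2')"
          using vb o(2)
          apply (simp add: True F1 inpf_def)
          apply (rule runb_stepN, simp, simp add: HH ss, simp add: HH ss True F1)
          apply (rule runb_stepN, simp, simp add: HH ss, simp add: HH ss True F1)
          apply (rule runb_stepN, simp, simp add: HH ss, simp add: HH ss True F1)
          apply (rule runb_stepN, simp, simp add: HH ss, simp add: HH ss True F1)
          apply (rule runb_stepN, simp, simp add: HH ss, simp add: HH ss True F1)
          apply (rule runb_eqI, simp add: True)
          done
        then show ?thesis
          by (intro exI[of _ ?M2']) (auto simp: o sr intro: runb_mono intro!: simI)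
      next
        case F2: False
        have sb: "M b - M' rN < cap'" "M b - Suc (M' rN) < cap'" using cb[of b] by simp_all
        show ?thesis
        proof (cases "M b = Suc (M' rN)")
          case True
          let ?M2' = "M'(rT := 0, fa a := inpf M' (M b))"
          have "runb prog inp cap' UNIV 7 (base, M') (nx, ?M2')"
            using vb sb
            apply (simp add: True F1 inpf_def)
            apply (rule runb_stepN, simp, simp add: HH ss, simp add: HH ss True F1)
            apply (rule runb_stepN, simp, simp add: HH ss, simp add: HH ss True F1)
            apply (rule runb_stepN, simp, simp add: HH ss, simp add: HH ss True F1)
            apply (rule runb_stepN, simp, simp add: HH ss, simp add: HH ss True F1)
            apply (rule runb_stepN, simp, simp add: HH ss, simp add: HH ss True F1)
            apply (rule runb_stepN, simp, simp add: HH ss, simp add: HH ss True F1)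
            apply (rule runb_stepN, simp, simp add: HH ss, simp add: HH ss True F1)
            apply (rule runb_eqI, simp add: True fun_eq_iff)
            done
          then show ?thesis
            by (intro exI[of _ ?M2']) (auto simp: o sr intro: runb_mono intro!: simI)
        next
          case F3: False
          have F4: "Suc (M' rN) < M b" "\<not> M b \<le> Suc (M' rN)" "M b - Suc (M' rN) \<noteq> 0" using F2 F3 by simp_all
          let ?M2' = "M'(rT := M b - M' rN - 1, fa a := inpf M' (M b))"
          have "runb prog inp cap' UNIV 7 (base, M') (nx, ?M2')"
            using vb sb F1 F2 F3
            apply (simp add: inpf_def)
            apply (rule runb_stepN, simp, simp add: HH ss, simp add: HH ss F1)
            apply (rule runb_stepN, simp, simp add: HH ss, simp add: HH ss F1)
            apply (rule runb_stepN, simp, simp add: HH ss, simp add: HH ss F1 F2)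
            apply (rule runb_stepN, simp, simp add: HH ss, simp add: HH ss F1 F2)
            apply (rule runb_stepN, simp, simp add: HH ss, simp add: HH ss F1 F2 F3 F4)
            apply (rule runb_stepN, simp, simp add: HH ss, simp add: HH ss F1 F2 F3 F4)
            apply (rule runb_stepN, simp, simp add: HH ss, simp add: HH ss F1 F2 F3 F4)
            apply (rule runb_eqI, simp add: fun_eq_iff)
            done
          then show ?thesis
            by (intro exI[of _ ?M2']) (auto simp: o sr intro: runb_mono intro!: simI)
        qed
      qed
    qed
    then show ?thesis
      by (auto simp: tb o nx_def[symmetric] DD_def bd intro!: bnd_upd)
  next case Halt with nhalt show ?thesis by simp
  qed
qed


lemma sim_halted:
  assumes emb: "embeds prog off ex oute orig" and h: "halted orig (pc, M)" and z: "M' rZ = 0"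
  shows "runb prog inp cap' UNIV 1 (tpc off ex orig pc, M') (ex, M')"
proof (cases "pc < length orig")
  case False thus ?thesis by (simp add: tpc_def runb_refl)
next
  case pc: True
  with h have hi: "orig ! pc = Halt" by (simp add: halted_def)
  define base where "base = off + pc * DD"
  have tb: "tpc off ex orig pc = base" using pc by (simp add: tpc_def base_def)
  have H: "\<And>q. base \<le> q \<Longrightarrow> q < base + length (blkp off ex oute orig pc) \<Longrightarrow>
      q < length prog \<and> prog ! q = blkp off ex oute orig pc ! (q - base)"
    using emb_nth[OF emb pc] unfolding base_def by blast
  have HH: "\<And>q. base \<le> q \<Longrightarrow> q < base + 1 \<Longrightarrow> q < length prog" "\<And>q. base \<le> q \<Longrightarrow> q < base + 1 \<Longrightarrow> prog ! q = [Jz rZ ex] ! (q - base)"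
    using H unfolding blkp_def hi by (simp_all add: blk_def)
  have z': "M' (Suc 0) = 0" using z by simp
  show ?thesis unfolding tb
    apply (rule runb_stepN, simp, simp add: HH halted_def not_le, simp add: HH step_def z z')
    apply (rule runb_eqI, simp)
    done
qed

lemma sim_out:
  assumes emb: "embeds prog off ex True orig" and pc: "pc < length orig" and oi: "orig ! pc = Out a b"
    and z: "M' rZ = 0" and c: "1 < cap'"
  shows "runb prog inp cap' UNIV 2 (tpc off ex orig pc, M') (ex, M'(rF := 1))"
proof -
  define base where "base = off + pc * DD"
  have tb: "tpc off ex orig pc = base" using pc by (simp add: tpc_def base_def)
  have H: "\<And>q. base \<le> q \<Longrightarrow> q < base + length (blkp off ex True orig pc) \<Longrightarrow>
      q < length prog \<and> prog ! q = blkp off ex True orig pc ! (q - base)"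
    using emb_nth[OF emb pc] unfolding base_def by blast
  have HH: "\<And>q. base \<le> q \<Longrightarrow> q < base + 2 \<Longrightarrow> q < length prog" "\<And>q. base \<le> q \<Longrightarrow> q < base + 2 \<Longrightarrow> prog ! q = [Const rF 1, Jz rZ ex] ! (q - base)"
    using H unfolding blkp_def oi by (simp_all add: blk_def)
  have z': "M' (Suc 0) = 0" "Suc 0 < cap'" using z c by simp_all
  show ?thesis unfolding tb
    apply (rule runb_stepN, simp, simp add: HH halted_def not_le, simp add: HH step_def wr_def z c z')
    apply (rule runb_stepN, simp, simp add: HH halted_def not_le, simp add: HH step_def wr_def z c z')
    apply (rule runb_eqI, simp)
    done
qed

lemma sim_steps:
  assumes emb: "embeds prog off ex oute orig"
  and capb: "\<forall>v<capo. 2 * v + 15 < cap'"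
  shows "steps orig inpo capo Wo k (pc, M) = Some ((pc2, M2), os) \<Longrightarrow> (oute \<longrightarrow> os = []) \<Longrightarrow>
    simrel M M' \<Longrightarrow> regok inpo M' \<Longrightarrow> bnd capo M \<Longrightarrow>
    \<exists>M2'. runb prog inp cap' UNIV (k * DD) (tpc off ex orig pc, M') (tpc off ex orig pc2, M2') \<and>
           simrel M2 M2' \<and> frame M' M2' \<and> bnd capo M2"
proof (induction k arbitrary: pc M M' os)
  case 0 thus ?case by (auto intro!: exI[of _ M'] runb_refl frame_refl)
next
  case (Suc k)
  show ?case
  proof (cases "halted orig (pc, M)")
    case True
    with Suc.prems(1) have "pc2 = pc" "M2 = M" by auto
    with Suc.prems show ?thesis by (auto intro!: exI[of _ M'] runb_refl frame_refl)
  next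
    case False
    with Suc.prems(1) obtain pc1 M1 os1 os2 where st: "step orig inpo capo Wo (pc, M) = Some ((pc1, M1), os1)"
      and st2: "steps orig inpo capo Wo k (pc1, M1) = Some ((pc2, M2), os2)" and os: "os = os1 @ os2"
      by (auto split: option.splits prod.splits)
    from sim_step[OF emb False st _ Suc.prems(3,4,5) capb, of inp] Suc.prems(2) os
    obtain M1' where r1: "runb prog inp cap' UNIV DD (tpc off ex orig pc, M') (tpc off ex orig pc1, M1')"
      and s1: "simrel M1 M1'" "frame M' M1'" "bnd capo M1" by auto
    have rg1: "regok inpo M1'" using regok_frame[OF Suc.prems(4) s1(2)] .
    from Suc.IH[OF st2 _ s1(1) rg1 s1(3)] Suc.prems(2) os
    obtain M2' where "runb prog inp cap' UNIV (k * DD) (tpc off ex orig pc1, M1') (tpc off ex orig pc2, M2')"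
      "simrel M2 M2'" "frame M1' M2'" "bnd capo M2" by auto
    with r1 s1 show ?thesis
      by (intro exI[of _ M2']) (auto dest: runb_trans intro: frame_trans)
  qed
qed

lemma steps_frame: "steps prog inp cap W k (pc, M) = Some ((pc2, M2), os) \<Longrightarrow> x \<notin> W \<Longrightarrow> M2 x = M x"
proof (induction k arbitrary: pc M os)
  case 0 thus ?case by simp
next
  case (Suc k)
  show ?case
  proof (cases "halted prog (pc, M)")
    case True with Suc.prems show ?thesis by auto
  next
    case False
    with Suc.prems(1) obtain pc1 M1 os1 os2 where st: "step prog inp cap W (pc, M) = Some ((pc1, M1), os1)"
      and st2: "steps prog inp cap W k (pc1, M1) = Some ((pc2, M2), os2)"
      by (auto split: option.splits prod.splits)
    have "M1 x = M x" using st Suc.prems(2)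
      by (auto simp: step_def wr_def split: instr.splits if_splits)
    with Suc.IH[OF st2 Suc.prems(2)] show ?thesis by simp
  qed
qed

lemma steps_bnd: "steps prog inp cap W k (pc, M) = Some ((pc2, M2), os) \<Longrightarrow> bnd cap M \<Longrightarrow> bnd cap M2"
proof (induction k arbitrary: pc M os)
  case 0 thus ?case by simp
next
  case (Suc k)
  show ?case
  proof (cases "halted prog (pc, M)")
    case True with Suc.prems show ?thesis by auto
  next
    case False
    with Suc.prems(1) obtain pc1 M1 os1 os2 where st: "step prog inp cap W (pc, M) = Some ((pc1, M1), os1)"
      and st2: "steps prog inp cap W k (pc1, M1) = Some ((pc2, M2), os2)"
      by (auto split: option.splits prod.splits)
    have "bnd cap M1" using st Suc.prems(2)
      by (auto simp: step_def wr_def bnd_def split: instr.splits if_splits)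
    with Suc.IH[OF st2] show ?thesis by simp
  qed
qed

lemma halts_det: "halts_within prog inp cap W t c c1 \<Longrightarrow> runb prog inp cap W n c c2 \<Longrightarrow> halted prog c2 \<Longrightarrow> c1 = c2"
proof -
  assume "halts_within prog inp cap W t c c1" "runb prog inp cap W n c c2" "halted prog c2"
  then obtain k1 os1 k2 os2 where a: "steps prog inp cap W k1 c = Some (c1, os1)" "halted prog c1"
     and b: "steps prog inp cap W k2 c = Some (c2, os2)"
    unfolding halts_within_def runb_def by blast
  show "c1 = c2"
  proof (cases "k1 \<le> k2")
    case True
    have "steps prog inp cap W (k1 + (k2 - k1)) c = Some (c1, os1)"
      using a by (simp add: steps_add steps_halted)
    with True b show ?thesis by simp
  next
    case False
    have "steps prog inp cap W (k2 + (k1 - k2)) c = Some (c2, os2)"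
      using b \<open>halted prog c2\<close> by (simp add: steps_add steps_halted)
    with False a show ?thesis by simp
  qed
qed

lemma runb_halts: "runb prog inp cap W n c c2 \<Longrightarrow> halted prog c2 \<Longrightarrow> n \<le> t \<Longrightarrow> halts_within prog inp cap W t c c2"
  unfolding runb_def halts_within_def by (meson order_trans)


lemma pow_ge_Suc: "Suc B \<le> (2::nat) ^ B"
  by (induction B) auto

lemma capacity_pos: "0 < capacity K n" by (simp add: capacity_def)

lemma reach_inv: "reach P U B K w M \<Longrightarrow> bnd (capacity K (length w)) M \<and> (\<forall>x. x \<notin> main_region B (length w) \<longrightarrow> M x = 0)"
proof (induction rule: reach.induct)
  case (init w pc M)
  then obtain k os where "steps P (word_input w) (capacity K (length w)) (main_region B (length w)) k (0, zero_mem) = Some ((pc, M), os)"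
    unfolding halts_within_def by blast
  moreover have "bnd (capacity K (length w)) zero_mem" by (simp add: bnd_def zero_mem_def capacity_pos)
  ultimately show ?case using steps_bnd steps_frame by (fastforce simp: zero_mem_def)
next
  case (upd w M i a pc M')
  then obtain k os where "steps U (upd_input i a) (capacity K (length w)) (main_region B (length w)) k (0, M) = Some ((pc, M'), os)"
    unfolding halts_within_def by blast
  with upd.IH show ?case using steps_bnd steps_frame by fastforce
qed

definition wS :: "nat \<Rightarrow> nat set \<Rightarrow> sym list" where
  "wS n S = map (\<lambda>j. if Suc j \<in> S then SB else SE) [0..<n]"

definition zc :: "nat \<Rightarrow> instr" where
  "zc q = (if q mod 3 = 0 then Const rT2 (2 * (q div 3)) else if q mod 3 = 1 then Add rT rS rT2 else Store rT rZ)"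


lemma take_drop_map: "j \<le> length w \<Longrightarrow> 1 \<le> i \<Longrightarrow> i \<le> j \<Longrightarrow>
   take (j - i + 1) (drop (i - 1) w) = map ((!) w) [i - 1..<j]"
  by (rule nth_equalityI) auto

lemma filter_noSA: "\<forall>x\<in>set xs. x \<noteq> SA \<Longrightarrow> filter (\<lambda>x. x \<noteq> SE) xs = replicate (length (filter (\<lambda>x. x \<noteq> SE) xs)) SB"
proof (induction xs)
  case Nil thus ?case by simp
next
  case (Cons x xs) thus ?case by (cases x) auto
qed

lemma infix_L1:
  assumes S: "S \<subseteq> {1..n}" and i: "1 \<le> i" "i \<le> n"
  shows "(infixes L1 ((wS n S)[i - 1 := SA]) \<noteq> {}) = (\<exists>s\<in>S. s < i)"
proof -
  define w' where "w' = (wS n S)[i - 1 := SA]"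
  have lw: "length w' = n" by (simp add: w'_def wS_def)
  have g: "\<And>t. t < n \<Longrightarrow> w' ! t = (if t = i - 1 then SA else if Suc t \<in> S then SB else SE)"
    using i by (auto simp: w'_def wS_def nth_list_update)
  show ?thesis unfolding w'_def[symmetric]
  proof
    assume "infixes L1 w' \<noteq> {}"
    then obtain x y where xy: "1 \<le> x" "x \<le> y" "y \<le> n" "take (y - x + 1) (drop (x - 1) w') \<in> L1"
      unfolding infixes_def lw by auto
    define idx where "idx = filter (\<lambda>t. w' ! t \<noteq> SE) [x - 1..<y]"
    from xy(4) obtain k where k: "k \<ge> 1" "filter (\<lambda>x. x \<noteq> SE) (map ((!) w') [x - 1..<y]) = replicate k SB @ [SA]"
      unfolding L1_def using take_drop_map[of y w' x] xy lw by auto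
    hence mi: "map ((!) w') idx = replicate k SB @ [SA]" unfolding idx_def by (simp add: filter_map comp_def)
    then obtain h rest where hr: "idx = h # rest" using k by (cases idx) auto
    have gh: "w' ! h = SB" using mi hr k by (cases k) auto
    have "SA \<in> set (map ((!) w') idx)" using mi by simp
    then obtain t1 where t1: "t1 \<in> set idx" "w' ! t1 = SA" by auto
    have setidx: "\<And>t. t \<in> set idx \<Longrightarrow> t < n" unfolding idx_def using xy by auto
    have t1i: "t1 = i - 1" using g[OF setidx[OF t1(1)]] t1(2) by (auto split: if_splits)
    have srt: "sorted idx" unfolding idx_def by (rule sorted_wrt_filter) simp
    have "h \<le> t1" using srt hr t1(1) by auto
    moreover have hn: "h < n" using setidx hr by simp
    moreover have "h \<noteq> i - 1" using g[OF hn] gh by auto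
    ultimately have "h < i - 1" using t1i by simp
    moreover have "Suc h \<in> S" using g[OF hn] gh by (auto split: if_splits)
    ultimately show "\<exists>s\<in>S. s < i" by (intro bexI[of _ "Suc h"]) auto
  next
    assume "\<exists>s\<in>S. s < i"
    then obtain s where s: "s \<in> S" "s < i" by blast
    have s1: "1 \<le> s" using s S by auto
    have up: "[s - 1..<i] = [s - 1..<i - 1] @ [i - 1]" using s1 s i by (simp add: upt_Suc_append[symmetric])
    have noSA: "\<forall>x\<in>set (map ((!) w') [s - 1..<i - 1]). x \<noteq> SA" using g i by (auto split: if_splits)
    have hasSB: "SB \<in> set (filter (\<lambda>x. x \<noteq> SE) (map ((!) w') [s - 1..<i - 1]))"
    proof -
      have "s - 1 \<in> set [s - 1..<i - 1]" using s s1 by auto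
      moreover have "w' ! (s - 1) = SB" using g[of "s - 1"] s s1 i by auto
      ultimately show ?thesis by force
    qed
    define k where "k = length (filter (\<lambda>x. x \<noteq> SE) (map ((!) w') [s - 1..<i - 1]))"
    have k1: "k \<ge> 1" unfolding k_def using length_pos_if_in_set[OF hasSB] by (simp only: One_nat_def Suc_le_eq)
    have "filter (\<lambda>x. x \<noteq> SE) (map ((!) w') [s - 1..<i]) = replicate k SB @ [SA]"
      unfolding up using filter_noSA[OF noSA] g[of "i - 1"] i by (simp add: k_def)
    hence "take (i - s + 1) (drop (s - 1) w') \<in> L1"
      using take_drop_map[of i w' s] s s1 i lw k1 unfolding L1_def by auto
    hence "(s, i) \<in> infixes L1 w'" unfolding infixes_def using s s1 i lw by auto
    thus "infixes L1 w' \<noteq> {}" by blast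
  qed
qed


lemma zero_run:
  assumes L: "\<And>q. q < 3 * m \<Longrightarrow> prog ! (zo + q) = zc q" and len: "zo + 3 * m \<le> length prog"
  and s: "M' rS = s" and z: "M' rZ = 0" and sb: "14 \<le> s" and cb: "\<And>j. j < m \<Longrightarrow> s + 2 * j < cap \<and> 2 * j < cap"
  shows "j \<le> m \<Longrightarrow> \<exists>Mj. runb prog inp cap UNIV (3 * j) (zo, M') (zo + 3 * j, Mj) \<and>
     (\<forall>a. a \<noteq> rT \<and> a \<noteq> rT2 \<longrightarrow> Mj a = (if \<exists>j'<j. a = s + 2 * j' then 0 else M' a))"
proof (induction j)
  case 0 show ?case by (intro exI[of _ M']) (auto intro: runb_refl)
next
  case (Suc j)
  then obtain Mj where r: "runb prog inp cap UNIV (3 * j) (zo, M') (zo + 3 * j, Mj)"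
    and mj: "\<forall>a. a \<noteq> rT \<and> a \<noteq> rT2 \<longrightarrow> Mj a = (if \<exists>j'<j. a = s + 2 * j' then 0 else M' a)" by auto
  have js: "j < m" using Suc.prems by simp
  have i0: "prog ! (zo + 3 * j) = Const rT2 (2 * j)" using L[of "3 * j"] js by (simp add: zc_def)
  have m: "(3 * j + 1) mod 3 = 1" "(3 * j + 2) mod 3 = 2" by presburger+
  have z1: "zc (3 * j + 1) = Add rT rS rT2" by (simp only: zc_def m) simp
  have z2: "zc (3 * j + 2) = Store rT rZ" by (simp only: zc_def m) simp
  have i1: "prog ! Suc (zo + 3 * j) = Add rT rS rT2" using L[of "3 * j + 1"] js z1 by simp
  have i2: "prog ! Suc (Suc (zo + 3 * j)) = Store rT rZ" using L[of "3 * j + 2"] js z2 by simp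
  have l2: "Suc (Suc (zo + 3 * j)) < length prog" "Suc (zo + 3 * j) < length prog" "zo + 3 * j < length prog" using len js by linarith+
  have ms: "Mj rS = s" "Mj rZ = 0" "Mj (Suc 0) = 0" using mj sb s z by auto
  have cj: "s + 2 * j < cap" "2 * j < cap" "0 < cap" using cb[OF js] by auto
  let ?Mn = "Mj(rT2 := 2 * j, rT := s + 2 * j, s + 2 * j := 0)"
  have "runb prog inp cap UNIV 3 (zo + 3 * j, Mj) (zo + 3 * Suc j, ?Mn)"
    by (rule runb_stepN, simp, simp add: halted_def not_le i0 i1 i2 l2, simp add: step_def wr_def i0 i1 i2 ms cj l2)+
       (rule runb_eqI, simp)
  from runb_trans[OF r this] have "runb prog inp cap UNIV (3 * Suc j) (zo, M') (zo + 3 * Suc j, ?Mn)" by (simp add: add.commute)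
  moreover have "\<forall>a. a \<noteq> rT \<and> a \<noteq> rT2 \<longrightarrow> ?Mn a = (if \<exists>j'<Suc j. a = s + 2 * j' then 0 else M' a)"
    using mj by (auto simp: less_Suc_eq)
  ultimately show ?case by blast
qed

lemma nth_mid: "length a \<le> q \<Longrightarrow> q < length a + length b \<Longrightarrow> (a @ b @ c) ! q = b ! (q - length a)"
  by (auto simp: nth_append)


definition keep0 :: "mem \<Rightarrow> mem \<Rightarrow> bool" where
  "keep0 M1 M2 = (\<forall>a. (a = rZ \<or> a = rC \<or> a = r1 \<or> a = rS \<or> a = rI \<or> a = rN \<or> (odd a \<and> 14 \<le> a)) \<longrightarrow> M2 a = M1 a)"
lemma keep0_trans: "keep0 M1 M2 \<Longrightarrow> keep0 M2 M3 \<Longrightarrow> keep0 M1 M3" by (simp add: keep0_def)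
lemma frame_keep0: "frame M1 M2 \<Longrightarrow> keep0 M1 M2" by (auto simp: keep0_def frame_def)
lemma frameF_keep0: "frameF M1 M2 \<Longrightarrow> keep0 M1 M2" by (auto simp: keep0_def frameF_def)

locale trac =
  fixes P U E :: "instr list" and B K :: nat
  assumes hP: "\<forall>w. \<exists>c. halts_within P (word_input w) (capacity K (length w)) (main_region B (length w)) (B * (length w + 1)) (0, zero_mem) c"
  and hU: "\<forall>w M i a. reach P U B K w M \<and> 1 \<le> i \<and> i \<le> length w \<longrightarrow>
         (\<exists>c. halts_within U (upd_input i a) (capacity K (length w)) (main_region B (length w)) B (0, M) c)"
  and hE: "\<forall>w M. reach P U B K w M \<longrightarrow> enum_ok E (capacity K (length w)) (scratch_region B (length w)) B M (infixes L1 w)"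
begin

definition K' :: nat where "K' = K + B + 6"

lemma capbig: "capacity K n * (32 * (n + 2) * (B + 1)) \<le> capacity K' n"
proof -
  have "32 * (n + 2) * (B + 1) \<le> 32 * (n + 2) * 2 ^ B"
    using pow_ge_Suc[of B] by (intro mult_le_mono2) simp
  also have "\<dots> = (n + 2) * 2 ^ (B + 5)" by (simp add: power_add algebra_simps)
  also have "\<dots> \<le> (n + 2) * (n + 2) ^ (B + 5)"
    by (intro mult_le_mono2 power_mono) auto
  also have "\<dots> = (n + 2) ^ Suc (B + 5)" by (simp only: power_Suc)
  also have "Suc (B + 5) = B + 6" by simp
  finally have "capacity K n * (32 * (n + 2) * (B + 1)) \<le> (n + 2) ^ K * (n + 2) ^ (B + 6)"
    by (simp add: capacity_def)
  also have "\<dots> = capacity K' n" by (simp add: capacity_def K'_def power_add)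
  finally show ?thesis .
qed

lemma capb: "\<forall>v<capacity K n. 2 * v + 15 < capacity K' n"
proof (intro allI impI)
  fix v assume v: "v < capacity K n"
  have "capacity K n * 64 \<le> capacity K n * (32 * (n + 2) * (B + 1))"
    by (intro mult_le_mono2) (simp add: algebra_simps)
  with capbig[of n] v show "2 * v + 15 < capacity K' n" by linarith
qed

lemma capsmall: "x \<le> 2 * (B + 1) * (n + 2) + 16 \<Longrightarrow> x < capacity K' n"
proof -
  assume x: "x \<le> 2 * (B + 1) * (n + 2) + 16"
  have "1 \<le> capacity K n" using capacity_pos[of K n] by simp
  hence "32 * (n + 2) * (B + 1) \<le> capacity K' n" using capbig[of n]
    by (metis dual_order.trans mult_1 mult_le_mono1)
  moreover have "2 * (B + 1) * (n + 2) + 16 < 32 * (n + 2) * (B + 1)"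
    by (simp add: algebra_simps)
  ultimately show ?thesis using x by linarith
qed


lemma nth_app3: "length a + length b \<le> q \<Longrightarrow> (a @ b @ c) ! q = c ! (q - length a - length b)"
  by (auto simp: nth_append diff_diff_add)

lemma step_out: "step prog inp cap W (pc, M) = Some (c', os) \<Longrightarrow> os \<noteq> [] \<Longrightarrow> \<exists>a b. prog ! pc = Out a b"
  by (auto simp: step_def wr_def split: instr.splits if_splits)

lemma tpc0: "tpc off (off + length orig * DD) orig 0 = off"
  by (simp add: tpc_def)

definition gInit :: "instr list" where
  "gInit = [Const r1 1, Const rC 14, Inp rNN rZ, Const rT (2*B), Add rT2 rNN r1, Mul rS rT rT2,
            Add rS rS rC, Add rA rNN rZ, Const rB 3, Add rN rNN rZ, Const rD 0]"

definition InitP :: "instr list" where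
  "InitP = gInit @ trseg (length gInit) (length gInit + length P * DD) False P @ []"

definition Inv :: "nat \<Rightarrow> nat set \<Rightarrow> mem \<Rightarrow> bool" where
  "Inv n S M' = (S \<subseteq> {1..n} \<and> (\<exists>M. reach P U B K (wS n S) M \<and> simrel M M') \<and>
     M' rZ = 0 \<and> M' rC = 14 \<and> M' r1 = 1 \<and> M' rS = 2 * B * (n + 1) + 14 \<and>
     (\<forall>i. 1 \<le> i \<and> i \<le> n \<longrightarrow> M' (fa i + 1) = (if i \<in> S then 1 else 0)))"

lemma length_gInit[simp]: "length gInit = 11" by (simp add: gInit_def)
lemma length_InitP: "length InitP = 11 + length P * DD" by (simp add: InitP_def)

lemma init_run: "\<exists>t M'. runb InitP (arg_input n) (capacity K' n) UNIV t (0, zero_mem) (length InitP, M') \<and> Inv n {} M'"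
proof -
  let ?cap = "capacity K' n"
  define M0' where "M0' = zero_mem(r1 := 1, rC := 14, rNN := n, rT := 2 * B, rT2 := n + 1, rS := 2 * B * (n + 1),
     rS := 2 * B * (n + 1) + 14, rA := n, rB := 3, rN := n, rD := 0)"
  have c: "n < ?cap" "2 * B < ?cap" "n + 1 < ?cap" "2 * B * (n + 1) < ?cap" "2 * B * (n + 1) + 14 < ?cap" "Suc n < ?cap"
     "1 < ?cap" "14 < ?cap" "3 < ?cap" "0 < ?cap" "Suc 0 < ?cap"
    "2 * B + 2 * B * n < ?cap" "2 * B + 2 * B * n + 14 < ?cap"
    by (auto intro!: capsmall simp: algebra_simps)
  have L: "\<And>q. q < 11 \<Longrightarrow> InitP ! q = gInit ! q" "\<And>q. q < 11 \<Longrightarrow> q < length InitP"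
    by (auto simp: InitP_def nth_append)
  have g1: "runb InitP (arg_input n) ?cap UNIV 11 (0, zero_mem) (11, M0')"
    unfolding M0'_def
    by (rule runb_stepN, simp, simp add: L halted_def not_le gInit_def length_InitP, simp add: L gInit_def step_def wr_def c zero_mem_def arg_input_def)+
       (rule runb_eqI, simp add: fun_eq_iff algebra_simps zero_mem_def)
  define w where "w = replicate n SE"
  have lw: "length w = n" by (simp add: w_def)
  obtain c where hc: "halts_within P (word_input w) (capacity K n) (main_region B n) (B * (n + 1)) (0, zero_mem) c"
    using hP lw by metis
  obtain pc M where cc: "c = (pc, M)" by (cases c)
  from hc obtain k os where k: "k \<le> B*(n+1)" "steps P (word_input w) (capacity K n) (main_region B n) k (0, zero_mem) = Some ((pc, M), os)" "halted P (pc, M)"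
    unfolding halts_within_def cc by blast
  have emb: "embeds InitP 11 (11 + length P * DD) False P"
    using embeds_app[of gInit "11 + length P * DD" False P "[]"] by (simp add: InitP_def)
  have rg: "regok (word_input w) M0'"
    by (auto simp: regok_def M0'_def inpf_def word_input_def w_def code_def zero_mem_def)
  have sr0: "simrel zero_mem M0'" by (simp add: simrel_def M0'_def zero_mem_def)
  have bd0: "bnd (capacity K n) zero_mem" by (simp add: bnd_def zero_mem_def capacity_pos)
  from sim_steps[OF emb capb k(2) _ sr0 rg bd0, of "arg_input n"]
  obtain M2' where r: "runb InitP (arg_input n) ?cap UNIV (k*DD) (tpc 11 (11 + length P * DD) P 0, M0') (tpc 11 (11 + length P * DD) P pc, M2')"
     and r': "simrel M M2'" "frame M0' M2'" by auto
  have fr: "\<And>a. a \<noteq> rT \<Longrightarrow> a \<noteq> rF \<Longrightarrow> a < 14 \<or> odd a \<Longrightarrow> M2' a = M0' a"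
    using r'(2) unfolding frame_def by blast
  have z: "M2' rZ = 0" using fr[of rZ] by (simp add: M0'_def zero_mem_def)
  have r2: "runb InitP (arg_input n) ?cap UNIV 1 (tpc 11 (11 + length P * DD) P pc, M2') (11 + length P * DD, M2')"
    using sim_halted[OF emb k(3), of M2'] z by simp
  have rch: "reach P U B K w M" by (rule reach.init) (use hc cc lw in simp)
  have ws: "wS n {} = w" by (simp add: wS_def w_def map_replicate_const)
  show ?thesis
  proof (intro exI conjI)
    show "runb InitP (arg_input n) ?cap UNIV (11 + k * DD + 1) (0, zero_mem) (length InitP, M2')"
      using runb_trans[OF runb_trans[OF g1 r[unfolded tpc0]] r2] by (simp add: length_InitP)
    show "Inv n {} M2'"
      unfolding Inv_def ws using rch r'(1) fr
      by (auto simp: M0'_def zero_mem_def fa_def)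
  qed
qed


lemma useg:
  assumes emb: "embeds prog off (off + length U * DD) False U"
  and rch: "reach P U B K w M" and lw: "length w = n" and i: "1 \<le> i" "i \<le> n"
  and sr: "simrel M M'" and rg: "regok (upd_input i a) M'"
  shows "\<exists>M2 M2'. reach P U B K (w[i - 1 := a]) M2 \<and>
     runb prog inp (capacity K' n) UNIV (B * DD + 1) (off, M') (off + length U * DD, M2') \<and> simrel M2 M2' \<and> frame M' M2'"
proof -
  obtain c where hc: "halts_within U (upd_input i a) (capacity K n) (main_region B n) B (0, M) c"
    using hU rch i lw by blast
  obtain pc M2 where cc: "c = (pc, M2)" by (cases c)
  from hc obtain k os where k: "k \<le> B" "steps U (upd_input i a) (capacity K n) (main_region B n) k (0, M) = Some ((pc, M2), os)" "halted U (pc, M2)"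
    unfolding halts_within_def cc by blast
  have rch2: "reach P U B K (w[i - 1 := a]) M2"
    by (rule reach.upd[OF rch i(1)]) (use hc cc lw i in simp_all)
  have bd: "bnd (capacity K n) M" using reach_inv[OF rch] lw by simp
  from sim_steps[OF emb capb k(2) _ sr rg bd, of inp]
  obtain M2' where r: "runb prog inp (capacity K' n) UNIV (k*DD) (tpc off (off + length U * DD) U 0, M') (tpc off (off + length U * DD) U pc, M2')"
     and r': "simrel M2 M2'" "frame M' M2'" by auto
  have z: "M2' rZ = 0" using r'(2) rg unfolding frame_def regok_def by auto
  have r2: "runb prog inp (capacity K' n) UNIV 1 (tpc off (off + length U * DD) U pc, M2') (off + length U * DD, M2')"
    using sim_halted[OF emb k(3), of M2'] z by simp
  have "runb prog inp (capacity K' n) UNIV (k * DD + 1) (off, M') (off + length U * DD, M2')"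
    using runb_trans[OF r[unfolded tpc0] r2] .
  moreover have "k * DD + 1 \<le> B * DD + 1" using k(1) by simp
  ultimately show ?thesis using rch2 r' by (blast intro: runb_mono)
qed

lemma regok_upd: "M' rZ = 0 \<Longrightarrow> M' rC = 14 \<Longrightarrow> M' r1 = 1 \<Longrightarrow> M' rA = i \<Longrightarrow> M' rN = 0 \<Longrightarrow> M' rD = code a \<Longrightarrow>
   regok (upd_input i a) M'"
  by (auto simp: regok_def upd_input_def inpf_def)

lemma wS_upd: "1 \<le> i \<Longrightarrow> i \<le> n \<Longrightarrow> (wS n S)[i - 1 := SB] = wS n (insert i S)"
   "1 \<le> i \<Longrightarrow> i \<le> n \<Longrightarrow> (wS n S)[i - 1 := SE] = wS n (S - {i})"
  by (auto simp: wS_def list_eq_iff_nth_eq nth_list_update)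

lemma length_wS[simp]: "length (wS n S) = n" by (simp add: wS_def)

definition upre :: "nat \<Rightarrow> instr list" where "upre c = [Inp rI rZ, Add rA rI rZ, Const rN 0, Const rD c]"
definition usuf :: "nat \<Rightarrow> instr list" where "usuf bv = [Add rT rI rI, Add rT rT rC, Add rT rT r1, Store rT bv]"
lemma length_upre[simp]: "length (upre c) = 4" by (simp add: upre_def)
lemma length_usuf[simp]: "length (usuf c) = 4" by (simp add: usuf_def)

definition updP :: "nat \<Rightarrow> nat \<Rightarrow> instr list" where
  "updP c bv = upre c @ trseg 4 (4 + length U * DD) False U @ usuf bv"

lemma length_updP: "length (updP c bv) = 4 + length U * DD + 4" by (simp add: updP_def)

lemma upd_run:
  assumes inv: "Inv n S M'" and i: "1 \<le> i" "i \<le> n"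
  and a: "(a = SB \<and> c = 2 \<and> bv = r1 \<and> S' = insert i S) \<or> (a = SE \<and> c = 3 \<and> bv = rZ \<and> S' = S - {i})"
  shows "\<exists>M''. runb (updP c bv) (arg_input i) (capacity K' n) UNIV (B * DD + 9) (0, M') (length (updP c bv), M'') \<and> Inv n S' M''"
proof -
  let ?cap = "capacity K' n"
  let ?ex = "4 + length U * DD"
  from inv obtain M where rch: "reach P U B K (wS n S) M" and sr: "simrel M M'" and rg: "M' rZ = 0" "M' rC = 14" "M' r1 = 1"
     "M' rS = 2 * B * (n + 1) + 14" and bm: "\<And>j. 1 \<le> j \<Longrightarrow> j \<le> n \<Longrightarrow> M' (fa j + 1) = (if j \<in> S then 1 else 0)"
     and Ss: "S \<subseteq> {1..n}"
    unfolding Inv_def by blast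
  have c: "i < ?cap" "c < ?cap" "0 < ?cap" using i a by (auto intro!: capsmall)
  have rgs: "M' (Suc 0) = 0" using rg(1) by (simp only: One_nat_def)
  have L: "\<And>q. q < 4 \<Longrightarrow> updP c bv ! q = [Inp rI rZ, Add rA rI rZ, Const rN 0, Const rD c] ! q"
          "\<And>q. q < 4 \<Longrightarrow> q < length (updP c bv)"
    by (simp_all add: updP_def nth_append, simp add: upre_def)
  define M1' where "M1' = M'(rI := i, rA := i, rN := 0, rD := c)"
  have g1: "runb (updP c bv) (arg_input i) ?cap UNIV 4 (0, M') (4, M1')"
    unfolding M1'_def
    by (rule runb_stepN, simp, simp add: L halted_def not_le length_updP, simp add: L step_def wr_def c rg rgs arg_input_def)+
       (rule runb_eqI, simp)
  have emb: "embeds (updP c bv) 4 ?ex False U"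
    using embeds_app[of "upre c" ?ex False U] by (simp add: updP_def)
  have ca: "c = code a" using a by (auto simp: code_def)
  have rg1: "regok (upd_input i a) M1'" by (rule regok_upd) (simp_all add: M1'_def rg rgs ca)
  have sr1: "simrel M M1'" using sr by (simp add: M1'_def simrel_def)
  from useg[OF emb rch length_wS i sr1 rg1, of "arg_input i"]
  obtain M2 M2' where rch2: "reach P U B K ((wS n S)[i - 1 := a]) M2"
     and r: "runb (updP c bv) (arg_input i) ?cap UNIV (B * DD + 1) (4, M1') (?ex, M2')"
     and sr2: "simrel M2 M2'" and fr: "frame M1' M2'" by blast
  have fr': "\<And>x. x \<noteq> rT \<Longrightarrow> x \<noteq> rF \<Longrightarrow> x < 14 \<or> odd x \<Longrightarrow> M2' x = M1' x"
    using fr unfolding frame_def by blast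
  have rg2: "M2' rZ = 0" "M2' rC = 14" "M2' r1 = 1" "M2' rI = i" "M2' rS = 2 * B * (n + 1) + 14"
      "M2' (Suc 0) = 0"
    using fr'[of rZ] fr'[of rC] fr'[of r1] fr'[of rI] fr'[of rS] by (simp_all add: M1'_def rg rgs)
  have bvv: "M2' bv = (if a = SB then 1 else 0)" using a rg2 by auto
  have bvT: "bv \<noteq> rT" using a by auto
  have L2: "\<And>q. ?ex \<le> q \<Longrightarrow> q < ?ex + 4 \<Longrightarrow> updP c bv ! q = [Add rT rI rI, Add rT rT rC, Add rT rT r1, Store rT bv] ! (q - ?ex)"
          "\<And>q. q < ?ex + 4 \<Longrightarrow> q < length (updP c bv)"
    by (simp add: updP_def nth_app3 del: length_usuf, simp add: usuf_def) (simp add: updP_def)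
  have c2: "i + i < ?cap" "2 * i < ?cap" "2 * i + 14 < ?cap" "2 * i + 15 < ?cap" "M2' bv < ?cap" "fa i < ?cap" "fa i + 1 < ?cap" "15 + 2 * i < ?cap" "14 + 2 * i < ?cap" "Suc (fa i) < ?cap"
    using i bvv by (auto intro!: capsmall simp: fa_def)
  define M3' where "M3' = M2'(rT := fa i + 1, fa i + 1 := M2' bv)"
  have g2: "runb (updP c bv) (arg_input i) ?cap UNIV 4 (?ex, M2') (?ex + 4, M3')"
    unfolding M3'_def
    by (rule runb_stepN, simp, simp add: L2 halted_def not_le length_updP, simp add: L2 step_def wr_def c2 rg2 bvT)+
       (rule runb_eqI, simp add: fun_eq_iff fa_def)
  show ?thesis
  proof (intro exI conjI)
    show "runb (updP c bv) (arg_input i) ?cap UNIV (B * DD + 9) (0, M') (length (updP c bv), M3')"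
      using runb_trans[OF runb_trans[OF g1 r] g2] by (simp add: length_updP add.commute)
    have ws: "(wS n S)[i - 1 := a] = wS n S'" using a wS_upd[OF i] by auto
    have "simrel M2 M3'" unfolding M3'_def
      by (rule simrel_odd[OF simrel_updR[OF sr2]]) (auto simp: fa_def)
    moreover have "\<forall>j. 1 \<le> j \<and> j \<le> n \<longrightarrow> M3' (fa j + 1) = (if j \<in> S' then 1 else 0)"
    proof (intro allI impI)
      fix j assume j: "1 \<le> j \<and> j \<le> n"
      show "M3' (fa j + 1) = (if j \<in> S' then 1 else 0)"
      proof (cases "j = i")
        case True thus ?thesis using bvv a by (auto simp: M3'_def)
      next
        case False
        have "M3' (fa j + 1) = M2' (fa j + 1)" using False by (simp add: M3'_def fa_def)
        also have "\<dots> = M1' (fa j + 1)" by (rule fr') (auto simp: fa_def)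
        also have "\<dots> = M' (fa j + 1)" by (simp add: M1'_def fa_def)
        finally show ?thesis using bm[of j] j False a by auto
      qed
    qed
    moreover have "S' \<subseteq> {1..n}" using Ss a i by auto
    ultimately show "Inv n S' M3'" unfolding Inv_def using rch2 ws rg2
      by (auto simp: M3'_def fa_def)
  qed
qed

definition TstP :: "instr list" where
  "TstP = [Inp rI rZ, Add rT rI rI, Add rT rT rC, Add rT rT r1, Load rAns rT]"

lemma tst_run:
  assumes inv: "Inv n S M'" and i: "1 \<le> i" "i \<le> n"
  shows "\<exists>M''. runb TstP (arg_input i) (capacity K' n) UNIV 5 (0, M') (5, M'') \<and> Inv n S M'' \<and> (M'' 0 \<noteq> 0 \<longleftrightarrow> i \<in> S)"
proof -
  let ?cap = "capacity K' n"
  from inv have rg: "M' rZ = 0" "M' rC = 14" "M' r1 = 1" "M' (Suc 0) = 0"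
     and bm: "M' (fa i + 1) = (if i \<in> S then 1 else 0)"
    unfolding Inv_def using i by auto
  have c2: "i < ?cap" "i + i < ?cap" "2 * i < ?cap" "2 * i + 14 < ?cap" "2 * i + 15 < ?cap" "M' (fa i + 1) < ?cap" "M' (Suc (fa i)) < ?cap" "fa i < ?cap" "fa i + 1 < ?cap" "15 + 2 * i < ?cap" "14 + 2 * i < ?cap" "Suc (fa i) < ?cap"
    using i bm by (auto intro!: capsmall simp: fa_def)
  define M'' where "M'' = M'(rI := i, rT := fa i + 1, rAns := M' (fa i + 1))"
  have "runb TstP (arg_input i) ?cap UNIV 5 (0, M') (5, M'')"
    unfolding M''_def
    by (rule runb_stepN, simp, simp add: TstP_def halted_def, simp add: TstP_def step_def wr_def c2 rg arg_input_def fa_back)+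
       (rule runb_eqI, simp add: fun_eq_iff fa_def)
  moreover have "Inv n S M''" using inv unfolding Inv_def M''_def simrel_def by (auto simp: fa_def)
  moreover have "M'' 0 \<noteq> 0 \<longleftrightarrow> i \<in> S" using bm by (simp add: M''_def)
  ultimately show ?thesis by blast
qed


lemma eseg:
  assumes emb: "embeds prog off (off + length E * DD) True E"
  and rch: "reach P U B K w M" and lw: "length w = n"
  and sr: "simrel M M'" and rg: "regok (\<lambda>_. 0) M'" and f0: "M' rF = 0"
  shows "\<exists>ME ME'. runb prog inp (capacity K' n) UNIV (B * DD + 2) (off, M') (off + length E * DD, ME') \<and>
     simrel ME ME' \<and> frameF M' ME' \<and> (\<forall>x. x \<notin> scratch_region B n \<longrightarrow> ME x = M x) \<and>
     (ME' rF \<noteq> 0 \<longleftrightarrow> infixes L1 w \<noteq> {})"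
proof -
  let ?c = "capacity K n"
  let ?W = "scratch_region B n"
  let ?ex = "off + length E * DD"
  have eo: "enum_ok E ?c ?W B M (infixes L1 w)" using hE rch lw by blast
  have bd: "bnd ?c M" using reach_inv[OF rch] lw by simp
  have z: "M' rZ = 0" using rg by (simp add: regok_def)
  define Pd where "Pd d = (\<exists>c os. steps E (\<lambda>_. 0) ?c ?W d (0, M) = Some (c, os) \<and> (os \<noteq> [] \<or> halted E c))" for d
  have exd: "\<exists>d. d \<le> B \<and> Pd d"
  proof (cases "halted E (0, M)")
    case True thus ?thesis by (intro exI[of _ 0]) (simp add: Pd_def)
  next
    case False
    from eo have "steps E (\<lambda>_. 0) ?c ?W 0 (0, M) = Some ((0, M), []) \<and> \<not> halted E (0, M) \<longrightarrow>
      (\<exists>d. 1 \<le> d \<and> d \<le> B \<and> (\<exists>c' os'. steps E (\<lambda>_. 0) ?c ?W (0 + d) (0, M) = Some (c', os')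
                  \<and> (length [] < length os' \<or> halted E c')))"
      using conjunct2[OF eo[unfolded enum_ok_def], rule_format, of 0 "(0, M)" "[]"] by simp
    hence "\<exists>d. 1 \<le> d \<and> d \<le> B \<and> (\<exists>c' os'. steps E (\<lambda>_. 0) ?c ?W (0 + d) (0, M) = Some (c', os')
                  \<and> (length [] < length os' \<or> halted E c'))" using False by simp
    thus ?thesis unfolding Pd_def by force
  qed
  define d where "d = (LEAST d. Pd d)"
  have Pdd: "Pd d" using exd unfolding d_def by (metis LeastI)
  have dle: "d \<le> B" using exd unfolding d_def by (metis Least_le order_trans)
  have dDD: "d * DD \<le> B * DD" by (rule mult_le_mono1[OF dle])
  have dmin: "\<And>d'. d' < d \<Longrightarrow> \<not> Pd d'" unfolding d_def using not_less_Least by blast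
  from Pdd obtain pcd Md osd where std: "steps E (\<lambda>_. 0) ?c ?W d (0, M) = Some ((pcd, Md), osd)"
     and dd: "osd \<noteq> [] \<or> halted E (pcd, Md)" unfolding Pd_def by auto
  from eo obtain kf cf osf where stf: "steps E (\<lambda>_. 0) ?c ?W kf (0, M) = Some (cf, osf)" and hf: "halted E cf"
     and sf: "set osf = infixes L1 w" unfolding enum_ok_def by blast
  have kf: "d \<le> kf"
  proof (rule ccontr)
    assume "\<not> d \<le> kf" hence "kf < d" by simp
    with dmin have "\<not> Pd kf" by blast
    with stf hf show False unfolding Pd_def by blast
  qed
  have "steps E (\<lambda>_. 0) ?c ?W (d + (kf - d)) (0, M) = Some (cf, osf)" using kf stf by simp
  then obtain os2 where osf: "osf = osd @ os2" and st2: "steps E (\<lambda>_. 0) ?c ?W (kf - d) (pcd, Md) = Some (cf, os2)"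
    using std by (auto simp: steps_add split: option.splits)
  show ?thesis
  proof (cases "osd = []")
    case True
    with dd have hd: "halted E (pcd, Md)" by simp
    have "os2 = []" using st2 hd by (simp add: steps_halted)
    with True osf sf have inf: "infixes L1 w = {}" by simp
    from sim_steps[OF emb capb std _ sr rg bd, of inp] True
    obtain ME' where r: "runb prog inp (capacity K' n) UNIV (d * DD) (tpc off ?ex E 0, M') (tpc off ?ex E pcd, ME')"
      and r': "simrel Md ME'" "frame M' ME'" by auto
    have zE: "ME' rZ = 0" using r'(2) z unfolding frame_def by auto
    have r2: "runb prog inp (capacity K' n) UNIV 1 (tpc off ?ex E pcd, ME') (?ex, ME')"
      using sim_halted[OF emb hd, of ME'] zE by simp
    have rr: "runb prog inp (capacity K' n) UNIV (B * DD + 2) (off, M') (?ex, ME')"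
      using runb_trans[OF r[unfolded tpc0] r2] by (elim runb_mono) (use dDD in linarith)
    have fF: "ME' rF = 0" using r'(2) f0 unfolding frame_def by auto
    show ?thesis
      using rr r'(1) frame_F[OF r'(2)] fF inf steps_frame[OF std] by blast
  next
    case False
    then obtain d' where d': "d = Suc d'" using std by (cases d) auto
    have "steps E (\<lambda>_. 0) ?c ?W (d' + 1) (0, M) = Some ((pcd, Md), osd)" using std d' by simp
    then have "(case steps E (\<lambda>_. 0) ?c ?W d' (0, M) of None \<Rightarrow> None
   | Some (c1, os1) \<Rightarrow> (case steps E (\<lambda>_. 0) ?c ?W 1 c1 of None \<Rightarrow> None | Some (c2, os2) \<Rightarrow> Some (c2, os1 @ os2))) = Some ((pcd, Md), osd)"
      by (simp only: steps_add)
    then obtain c1 os1 osx where st1: "steps E (\<lambda>_. 0) ?c ?W d' (0, M) = Some (c1, os1)"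
      and st1b: "steps E (\<lambda>_. 0) ?c ?W 1 c1 = Some ((pcd, Md), osx)" and osd: "osd = os1 @ osx"
      by (auto simp del: steps.simps split: option.splits)
    obtain pc1 M1 where c1: "c1 = (pc1, M1)" by (cases c1)
    have npd: "\<not> Pd d'" using dmin d' by simp
    hence os1: "os1 = []" and nh1: "\<not> halted E (pc1, M1)" using st1 c1 unfolding Pd_def by auto
    from st1b nh1 c1 have "step E (\<lambda>_. 0) ?c ?W (pc1, M1) = Some ((pcd, Md), osx)"
      by (auto split: option.splits)
    moreover have "osx \<noteq> []" using False osd os1 by simp
    ultimately obtain a b where oi: "E ! pc1 = Out a b" using step_out by blast
    have pc1: "pc1 < length E" using nh1 by (simp add: halted_def)
    from sim_steps[OF emb capb st1[unfolded c1] _ sr rg bd, of inp] os1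
    obtain ME' where r: "runb prog inp (capacity K' n) UNIV (d' * DD) (tpc off ?ex E 0, M') (tpc off ?ex E pc1, ME')"
      and r': "simrel M1 ME'" "frame M' ME'" by auto
    have zE: "ME' rZ = 0" using r'(2) z unfolding frame_def by auto
    have c1c: "1 < capacity K' n" by (rule capsmall) simp
    have r2: "runb prog inp (capacity K' n) UNIV 2 (tpc off ?ex E pc1, ME') (?ex, ME'(rF := 1))"
      using sim_out[OF emb pc1 oi, of ME' "capacity K' n" inp] zE c1c by simp
    have rr: "runb prog inp (capacity K' n) UNIV (B * DD + 2) (off, M') (?ex, ME'(rF := 1))"
      using runb_trans[OF r[unfolded tpc0] r2]
    proof (elim runb_mono)
      have "d' * DD \<le> d * DD" using d' by simp
      thus "d' * DD + 2 \<le> B * DD + 2" using dDD by linarith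
    qed
    have inf: "infixes L1 w \<noteq> {}" using sf osf osd \<open>osx \<noteq> []\<close> by auto
    show ?thesis
    proof (intro exI conjI)
      show "runb prog inp (capacity K' n) UNIV (B * DD + 2) (off, M') (?ex, ME'(rF := 1))" by (rule rr)
      show "simrel M1 (ME'(rF := 1))" using simrel_updR[OF r'(1), of rF] by simp
      show "frameF M' (ME'(rF := 1))" using frame_updF[OF r'(2)] .
      show "\<forall>x. x \<notin> scratch_region B n \<longrightarrow> M1 x = M x" using steps_frame[OF st1[unfolded c1]] by blast
      show "((ME'(rF := 1)) rF \<noteq> 0) = (infixes L1 w \<noteq> {})" using inf by simp
    qed
  qed
qed


definition q0 :: "instr list" where "q0 = [Inp rI rZ, Add rA rI rZ, Const rN 0, Const rD 1]"
definition q1 :: "instr list" where "q1 = [Const rA 0, Const rD 0, Const rF 0]"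
definition q2 :: "instr list" where
  "q2 = [Add rA rI rZ, Add rT rI rI, Add rT rT rC, Add rT rT r1, Load rT2 rT, Const rD 3, Sub rD rD rT2]"
definition q3 :: "instr list" where "q3 = [Sub rAns r1 rF]"
definition e1 :: nat where "e1 = 4 + length U * DD"
definition e2 :: nat where "e2 = e1 + 3 + length E * DD"
definition e3 :: nat where "e3 = e2 + 3 * B"
definition e4 :: nat where "e4 = e3 + 7 + length U * DD"
definition zcode :: "instr list" where "zcode = map zc [0..<3*B]"
definition QP :: "instr list" where
  "QP = q0 @ trseg 4 e1 False U @ q1 @ trseg (e1 + 3) e2 True E @ zcode @ q2 @ trseg (e3 + 7) e4 False U @ q3"

lemma lens[simp]: "length q0 = 4" "length q1 = 3" "length q2 = 7" "length q3 = 1" "length zcode = 3 * B"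
  by (simp_all add: q0_def q1_def q2_def q3_def zcode_def)

lemma length_QP: "length QP = e4 + 1"
  by (simp add: QP_def e1_def e2_def e3_def e4_def)

lemma embU1: "embeds QP 4 (4 + length U * DD) False U"
  using embeds_app[of q0 e1 False U] unfolding QP_def e1_def by simp

lemma embE: "embeds QP (e1 + 3) (e1 + 3 + length E * DD) True E"
proof -
  let ?pre = "q0 @ trseg 4 e1 False U @ q1"
  let ?post = "zcode @ q2 @ trseg (e3 + 7) e4 False U @ q3"
  have l: "length ?pre = e1 + 3" by (simp add: e1_def)
  have "embeds (?pre @ trseg (length ?pre) e2 True E @ ?post) (length ?pre) e2 True E" by (rule embeds_app)
  hence "embeds QP (e1 + 3) e2 True E" unfolding l by (simp add: QP_def)
  thus ?thesis unfolding e2_def .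
qed

lemma embU2: "embeds QP (e3 + 7) (e3 + 7 + length U * DD) False U"
proof -
  let ?pre = "q0 @ trseg 4 e1 False U @ q1 @ trseg (e1 + 3) e2 True E @ zcode @ q2"
  have l: "length ?pre = e3 + 7" by (simp add: e1_def e2_def e3_def)
  have "embeds (?pre @ trseg (length ?pre) e4 False U @ q3) (length ?pre) e4 False U" by (rule embeds_app)
  hence "embeds QP (e3 + 7) e4 False U" unfolding l by (simp add: QP_def)
  thus ?thesis unfolding e4_def .
qed

lemma LQ0: "q < 4 \<Longrightarrow> QP ! q = q0 ! q" "q < 4 \<Longrightarrow> q < length QP"
  by (simp_all add: QP_def nth_append length_QP)

lemma LQ1: "e1 \<le> q \<Longrightarrow> q < e1 + 3 \<Longrightarrow> QP ! q = q1 ! (q - e1)" "q < e1 + 3 \<Longrightarrow> q < length QP"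
proof -
  have "QP = (q0 @ trseg 4 e1 False U) @ q1 @ (trseg (e1 + 3) e2 True E @ zcode @ q2 @ trseg (e3 + 7) e4 False U @ q3)"
    by (simp add: QP_def)
  moreover have "length (q0 @ trseg 4 e1 False U) = e1" by (simp add: e1_def)
  ultimately show "e1 \<le> q \<Longrightarrow> q < e1 + 3 \<Longrightarrow> QP ! q = q1 ! (q - e1)" by (metis nth_mid lens(2))
  show "q < e1 + 3 \<Longrightarrow> q < length QP" by (simp add: length_QP e4_def e3_def e2_def)
qed

lemma LZ: "q < 3 * B \<Longrightarrow> QP ! (e2 + q) = zc q" "e2 + 3 * B \<le> length QP"
proof -
  have "QP = (q0 @ trseg 4 e1 False U @ q1 @ trseg (e1 + 3) e2 True E) @ zcode @ (q2 @ trseg (e3 + 7) e4 False U @ q3)"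
    by (simp add: QP_def)
  moreover have "length (q0 @ trseg 4 e1 False U @ q1 @ trseg (e1 + 3) e2 True E) = e2" by (simp add: e1_def e2_def)
  ultimately show "q < 3 * B \<Longrightarrow> QP ! (e2 + q) = zc q"
    using nth_mid[of "q0 @ trseg 4 e1 False U @ q1 @ trseg (e1 + 3) e2 True E" "e2 + q" zcode] by (simp add: zcode_def)
  show "e2 + 3 * B \<le> length QP" by (simp add: length_QP e4_def e3_def)
qed

lemma LQ2: "e3 \<le> q \<Longrightarrow> q < e3 + 7 \<Longrightarrow> QP ! q = q2 ! (q - e3)" "q < e3 + 7 \<Longrightarrow> q < length QP"
proof -
  have "QP = (q0 @ trseg 4 e1 False U @ q1 @ trseg (e1 + 3) e2 True E @ zcode) @ q2 @ (trseg (e3 + 7) e4 False U @ q3)"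
    by (simp add: QP_def)
  moreover have "length (q0 @ trseg 4 e1 False U @ q1 @ trseg (e1 + 3) e2 True E @ zcode) = e3" by (simp add: e1_def e2_def e3_def)
  ultimately show "e3 \<le> q \<Longrightarrow> q < e3 + 7 \<Longrightarrow> QP ! q = q2 ! (q - e3)" by (metis nth_mid lens(3))
  show "q < e3 + 7 \<Longrightarrow> q < length QP" by (simp add: length_QP e4_def)
qed

lemma LQ3: "QP ! e4 = Sub rAns r1 rF" "e4 < length QP"
proof -
  have "QP = (q0 @ trseg 4 e1 False U @ q1 @ trseg (e1 + 3) e2 True E @ zcode @ q2 @ trseg (e3 + 7) e4 False U) @ q3"
    by (simp add: QP_def)
  moreover have "length (q0 @ trseg 4 e1 False U @ q1 @ trseg (e1 + 3) e2 True E @ zcode @ q2 @ trseg (e3 + 7) e4 False U) = e4"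
    by (simp add: e1_def e2_def e3_def e4_def)
  ultimately show "QP ! e4 = Sub rAns r1 rF" by (metis nth_append_length q3_def)
  show "e4 < length QP" by (simp add: length_QP)
qed


lemma qry_run:
  assumes inv: "Inv n S M'" and i: "1 \<le> i" "i \<le> n"
  shows "\<exists>M''. runb QP (arg_input i) (capacity K' n) UNIV (3 * B * DD + 3 * B + 19) (0, M') (length QP, M'') \<and>
     Inv n S M'' \<and> (M'' 0 \<noteq> 0 \<longleftrightarrow> (\<forall>s\<in>S. i \<le> s))"
proof -
  let ?cap = "capacity K' n"
  let ?inp = "arg_input i"
  define sv where "sv = 2 * B * (n + 1) + 14"
  from inv obtain M where rch: "reach P U B K (wS n S) M" and sr: "simrel M M'" and rg: "M' rZ = 0" "M' rC = 14" "M' r1 = 1"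
     "M' rS = sv" and bm: "\<And>j. 1 \<le> j \<Longrightarrow> j \<le> n \<Longrightarrow> M' (fa j + 1) = (if j \<in> S then 1 else 0)"
     and Ss: "S \<subseteq> {1..n}"
    unfolding Inv_def sv_def by blast
  have rgs: "M' (Suc 0) = 0" using rg(1) by (simp only: One_nat_def)
  have c: "i < ?cap" "1 < ?cap" "0 < ?cap" "Suc 0 < ?cap" "3 < ?cap" using i by (auto intro!: capsmall)
  define M1' where "M1' = M'(rI := i, rA := i, rN := 0, rD := 1)"
  have g1: "runb QP ?inp ?cap UNIV 4 (0, M') (4, M1')"
    unfolding M1'_def
    by (rule runb_stepN, simp, simp add: LQ0 halted_def not_le q0_def length_QP e4_def e3_def e2_def e1_def, simp add: LQ0 q0_def step_def wr_def c rg rgs arg_input_def)+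
       (rule runb_eqI, simp)
  have rg1: "regok (upd_input i SA) M1'" by (rule regok_upd) (simp_all add: M1'_def rg rgs code_def)
  have sr1: "simrel M M1'" using sr by (simp add: M1'_def simrel_def)
  have r1v: "M1' rZ = 0" "M1' rC = 14" "M1' r1 = 1" "M1' rS = sv" "M1' rI = i" "M1' rN = 0"
    by (simp_all add: M1'_def rg rgs)
  from useg[OF embU1 rch length_wS i sr1 rg1, of ?inp]
  obtain M2 M2' where rch2: "reach P U B K ((wS n S)[i - 1 := SA]) M2"
    and r2: "runb QP ?inp ?cap UNIV (B * DD + 1) (4, M1') (4 + length U * DD, M2')"
    and sr2: "simrel M2 M2'" and fr2: "frame M1' M2'" by blast
  have e1': "4 + length U * DD = e1" by (simp add: e1_def)
  have k2: "keep0 M1' M2'" by (rule frame_keep0[OF fr2])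
  have fr2': "\<And>x. x \<noteq> rT \<Longrightarrow> x < 14 \<or> odd x \<Longrightarrow> M2' x = M1' x" using fr2 unfolding frame_def by blast
  have rg2: "M2' rN = 0"
    using fr2'[of rN] by (simp add: M1'_def)
  define M3' where "M3' = M2'(rA := 0, rD := 0, rF := 0)"
  have g3: "runb QP ?inp ?cap UNIV 3 (e1, M2') (e1 + 3, M3')"
    unfolding M3'_def
    by (rule runb_stepN, simp, simp add: LQ1 halted_def not_le q1_def length_QP e4_def e3_def e2_def, simp add: LQ1 q1_def step_def wr_def c)+
       (rule runb_eqI, simp)
  have k3: "keep0 M2' M3'" by (simp add: keep0_def M3'_def)
  have sr3: "simrel M2 M3'" using sr2 by (simp add: M3'_def simrel_def fa_def)
  have k13: "keep0 M1' M3'" using keep0_trans[OF k2 k3] .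
  have rg3: "regok (\<lambda>_. 0) M3'"
    using k13 r1v rg2 unfolding keep0_def by (simp add: regok_def M3'_def inpf_def)
  have f3: "M3' rF = 0" by (simp add: M3'_def)
  from eseg[OF embE rch2 _ sr3 rg3 f3, of n ?inp]
  obtain ME ME' where rE: "runb QP ?inp ?cap UNIV (B * DD + 2) (e1 + 3, M3') (e1 + 3 + length E * DD, ME')"
    and srE: "simrel ME ME'" and frE: "frameF M3' ME'" and scr: "\<forall>x. x \<notin> scratch_region B n \<longrightarrow> ME x = M2 x"
    and fl: "(ME' rF \<noteq> 0) = (infixes L1 ((wS n S)[i - 1 := SA]) \<noteq> {})" by auto
  have e2': "e1 + 3 + length E * DD = e2" by (simp add: e2_def)
  have k1E: "keep0 M1' ME'" using keep0_trans[OF k13 frameF_keep0[OF frE]] .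
  have rgE: "ME' rS = sv" "ME' rZ = 0" using k1E r1v unfolding keep0_def by auto
  have cbz: "\<And>j. j < B \<Longrightarrow> sv + 2 * j < ?cap \<and> 2 * j < ?cap"
    by (auto intro!: capsmall simp: sv_def algebra_simps)
  from zero_run[where prog=QP and zo=e2 and m=B and M'=ME' and s=sv and cap="?cap" and inp="?inp" and j=B,
     OF LZ(1) LZ(2) rgE(1) rgE(2) _ cbz le_refl]
  obtain Mz where rz: "runb QP ?inp ?cap UNIV (3 * B) (e2, ME') (e2 + 3 * B, Mz)"
    and mz: "\<forall>a. a \<noteq> rT \<and> a \<noteq> rT2 \<longrightarrow> Mz a = (if \<exists>j'<B. a = sv + 2 * j' then 0 else ME' a)"
    by (auto simp: sv_def)
  have e3': "e2 + 3 * B = e3" by (simp add: e3_def)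
  have svodd: "\<And>j a. odd a \<Longrightarrow> a \<noteq> sv + 2 * j" by (auto simp: sv_def)
  have kz: "keep0 ME' Mz" unfolding keep0_def
  proof (intro allI impI)
    fix a assume a: "a = rZ \<or> a = rC \<or> a = r1 \<or> a = rS \<or> a = rI \<or> a = rN \<or> (odd a \<and> 14 \<le> a)"
    have "\<not> (\<exists>j'<B. a = sv + 2 * j')" using a svodd by (auto simp: sv_def)
    moreover have "a \<noteq> rT \<and> a \<noteq> rT2" using a by auto
    ultimately show "Mz a = ME' a" using mz by auto
  qed
  have fz: "Mz rF = ME' rF" using mz by (auto simp: sv_def)
  have srz: "simrel M2 Mz" unfolding simrel_def
  proof
    fix x
    have eqv: "\<And>j. (fa x = sv + 2 * j) = (x = B * (n + 1) + j)" by (auto simp: fa_def sv_def)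
    show "Mz (fa x) = M2 x"
    proof (cases "x \<in> scratch_region B n")
      case True
      then obtain j where j: "j < B" "x = B * (n + 1) + j" unfolding scratch_region_def
        by (metis add_diff_inverse_nat atLeastLessThan_iff nat_add_left_cancel_less not_less)
      have "Mz (fa x) = 0" using mz j eqv by auto
      moreover have "M2 x = 0" using reach_inv[OF rch2] True by (auto simp: main_region_def scratch_region_def)
      ultimately show ?thesis by simp
    next
      case False
      hence "\<not> (\<exists>j'<B. fa x = sv + 2 * j')" using eqv by (auto simp: scratch_region_def)
      hence "Mz (fa x) = ME' (fa x)" using mz by auto
      also have "\<dots> = ME x" using srE by (simp add: simrel_def)
      also have "\<dots> = M2 x" using scr False by auto
      finally show ?thesis .
    qed
  qed
  have k1z: "keep0 M1' Mz" using keep0_trans[OF k1E kz] .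
  have rgz: "Mz rI = i" "Mz rZ = 0" "Mz rC = 14" "Mz r1 = 1" "Mz rN = 0" "Mz (Suc 0) = 0"
    using k1z r1v unfolding keep0_def by auto
  define bt where "bt = (if i \<in> S then 1 else 0 :: nat)"
  have bit: "Mz (fa i + 1) = bt" "Mz (Suc (fa i)) = bt"
    using k1z bm[OF i] unfolding keep0_def bt_def by (auto simp: M1'_def fa_def)
  have c2: "i + i < ?cap" "2 * i < ?cap" "fa i < ?cap" "Suc (fa i) < ?cap" "bt < ?cap" "3 - bt < ?cap"
    using i by (auto intro!: capsmall simp: fa_def bt_def)
  define M5' where "M5' = Mz(rA := i, rT := fa i + 1, rT2 := bt, rD := 3 - bt)"
  have g5: "runb QP ?inp ?cap UNIV 7 (e3, Mz) (e3 + 7, M5')"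
    unfolding M5'_def
    by (rule runb_stepN, simp, simp add: LQ2 halted_def not_le q2_def length_QP e4_def, simp add: LQ2 q2_def step_def wr_def c c2 rgz bit fa_back)+
       (rule runb_eqI, simp add: fun_eq_iff fa_def)
  define a0 where "a0 = (if i \<in> S then SB else SE)"
  have rg5: "regok (upd_input i a0) M5'"
    by (rule regok_upd) (simp_all add: M5'_def rgz a0_def bt_def code_def)
  have sr5: "simrel M2 M5'" using srz by (simp add: M5'_def simrel_def fa_def)
  have k5: "keep0 Mz M5'" by (simp add: keep0_def M5'_def)
  have lw2: "length ((wS n S)[i - 1 := SA]) = n" by simp
  from useg[OF embU2 rch2 lw2 i sr5 rg5, of ?inp]
  obtain M6 M6' where rch6: "reach P U B K (((wS n S)[i - 1 := SA])[i - 1 := a0]) M6"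
    and r6: "runb QP ?inp ?cap UNIV (B * DD + 1) (e3 + 7, M5') (e3 + 7 + length U * DD, M6')"
    and sr6: "simrel M6 M6'" and fr6: "frame M5' M6'" by blast
  have e4': "e3 + 7 + length U * DD = e4" by (simp add: e4_def)
  have ws: "((wS n S)[i - 1 := SA])[i - 1 := a0] = wS n S"
  proof -
    have "wS n S ! (i - 1) = a0" using i by (simp add: wS_def a0_def)
    hence "(wS n S)[i - 1 := a0] = wS n S" by (metis list_update_id)
    thus ?thesis by simp
  qed
  have f6: "M6' rF = ME' rF" using fr6 fz unfolding frame_def by (simp add: M5'_def)
  have k6: "keep0 M5' M6'" by (rule frame_keep0[OF fr6])
  define M7' where "M7' = M6'(rAns := 1 - M6' rF)"
  have r1_6: "M6' r1 = 1" using k6 k5 rgz unfolding keep0_def by (simp add: M5'_def)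
  have c3: "1 - M6' rF < ?cap" "Suc 0 - M6' rF < ?cap" using c by linarith+
  have g7: "runb QP ?inp ?cap UNIV 1 (e4, M6') (e4 + 1, M7')"
    unfolding M7'_def
    by (rule runb_stepN, simp, simp add: LQ3 halted_def not_le, simp add: LQ3 step_def wr_def c3 r1_6, rule runb_eqI, simp)
  have k7: "keep0 M6' M7'" by (simp add: keep0_def M7'_def)
  have k17: "keep0 M1' M7'" using keep0_trans[OF keep0_trans[OF keep0_trans[OF k1z k5] k6] k7] .
  show ?thesis
  proof (intro exI conjI)
    have "runb QP ?inp ?cap UNIV (4 + (B * DD + 1) + 3 + (B * DD + 2) + 3 * B + 7 + (B * DD + 1) + 1) (0, M') (e4 + 1, M7')"
      using runb_trans[OF runb_trans[OF runb_trans[OF runb_trans[OF runb_trans[OF runb_trans[OF runb_trans[OF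
        g1 r2[unfolded e1']] g3] rE[unfolded e2']] rz[unfolded e3']] g5] r6[unfolded e4']] g7] .
    thus "runb QP ?inp ?cap UNIV (3 * B * DD + 3 * B + 19) (0, M') (length QP, M7')"
      by (simp add: length_QP algebra_simps)
    show "Inv n S M7'"
      unfolding Inv_def
    proof (intro conjI)
      show "S \<subseteq> {1..n}" by (rule Ss)
      show "\<exists>M. reach P U B K (wS n S) M \<and> simrel M M7'"
        using rch6 ws sr6 by (intro exI[of _ M6]) (auto simp: M7'_def simrel_def fa_def)
      show "M7' rZ = 0" "M7' rC = 14" "M7' r1 = 1" "M7' rS = 2 * B * (n + 1) + 14"
        using k17 r1v unfolding keep0_def sv_def by auto
      show "\<forall>j. 1 \<le> j \<and> j \<le> n \<longrightarrow> M7' (fa j + 1) = (if j \<in> S then 1 else 0)"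
      proof (intro allI impI)
        fix j assume j: "1 \<le> j \<and> j \<le> n"
        have "M7' (fa j + 1) = M1' (fa j + 1)" using k17 unfolding keep0_def by (simp add: fa_def)
        also have "\<dots> = M' (fa j + 1)" by (simp add: M1'_def fa_def)
        finally show "M7' (fa j + 1) = (if j \<in> S then 1 else 0)" using bm j by simp
      qed
    qed
    have "M7' 0 \<noteq> 0 \<longleftrightarrow> ME' rF = 0" by (simp add: M7'_def f6) linarith
    also have "\<dots> \<longleftrightarrow> \<not> (\<exists>s\<in>S. s < i)" using fl infix_L1[OF Ss i] by auto
    also have "\<dots> \<longleftrightarrow> (\<forall>s\<in>S. i \<le> s)" by auto
    finally show "M7' 0 \<noteq> 0 \<longleftrightarrow> (\<forall>s\<in>S. i \<le> s)" .
  qed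
qed


lemma halted_end: "halted prog (length prog, M)" by (simp add: halted_def)

lemma su_inv: "su_reach InitP TstP (updP 2 r1) (updP 3 rZ) QP K' n S M' \<Longrightarrow> Inv n S M'"
proof (induction rule: su_reach.induct)
  case (init t pc M)
  obtain t' M'' where r: "runb InitP (arg_input n) (capacity K' n) UNIV t' (0, zero_mem) (length InitP, M'')" and iv: "Inv n {} M''"
    using init_run by blast
  from halts_det[OF init r halted_end] iv show ?case by simp
next
  case (ins S M i t pc M')
  obtain M'' where r: "runb (updP 2 r1) (arg_input i) (capacity K' n) UNIV (B * DD + 9) (0, M) (length (updP 2 r1), M'')"
     and iv: "Inv n (insert i S) M''"
    using upd_run[OF ins.IH ins.hyps(2,3), of SB 2 r1 "insert i S"] by auto
  from halts_det[OF ins.hyps(4) r halted_end] iv show ?case by simp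
next
  case (rem S M i t pc M')
  obtain M'' where r: "runb (updP 3 rZ) (arg_input i) (capacity K' n) UNIV (B * DD + 9) (0, M) (length (updP 3 rZ), M'')"
     and iv: "Inv n (S - {i}) M''"
    using upd_run[OF rem.IH rem.hyps(2,3), of SE 3 rZ "S - {i}"] by auto
  from halts_det[OF rem.hyps(4) r halted_end] iv show ?case by simp
next
  case (tst S M i t pc M')
  obtain M'' where r: "runb TstP (arg_input i) (capacity K' n) UNIV 5 (0, M) (5, M'')" and iv: "Inv n S M''"
    using tst_run[OF tst.IH tst.hyps(2,3)] by auto
  have "halted TstP (5, M'')" by (simp add: halted_def TstP_def)
  from halts_det[OF tst.hyps(4) r this] iv show ?case by simp
next
  case (qry S M i t pc M')
  obtain M'' where r: "runb QP (arg_input i) (capacity K' n) UNIV (3 * B * DD + 3 * B + 19) (0, M) (length QP, M'')"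
     and iv: "Inv n S M''"
    using qry_run[OF qry.IH qry.hyps(2,3)] by auto
  from halts_det[OF qry.hyps(4) r halted_end] iv show ?case by simp
qed

lemma ds_ok: "prefix_U1_ds InitP TstP (updP 2 r1) (updP 3 rZ) QP (3 * B * DD + 3 * B + 19) K'"
  unfolding prefix_U1_ds_def
proof (intro conjI allI impI)
  fix n
  obtain t' M'' where r: "runb InitP (arg_input n) (capacity K' n) UNIV t' (0, zero_mem) (length InitP, M'')"
    using init_run by blast
  show "\<exists>t c. halts_within InitP (arg_input n) (capacity K' n) UNIV t (0, zero_mem) c"
    using runb_halts[OF r halted_end le_refl] by blast
next
  fix n S M i
  assume a: "su_reach InitP TstP (updP 2 r1) (updP 3 rZ) QP K' n S M \<and> 1 \<le> i \<and> i \<le> n"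
  hence iv: "Inv n S M" and i: "1 \<le> i" "i \<le> n" using su_inv by auto
  have bnd1: "B * DD + 9 \<le> 3 * B * DD + 3 * B + 19" by simp
  obtain M1 where r1: "runb (updP 2 r1) (arg_input i) (capacity K' n) UNIV (B * DD + 9) (0, M) (length (updP 2 r1), M1)"
    using upd_run[OF iv i, of SB 2 r1 "insert i S"] by auto
  show "\<exists>c. halts_within (updP 2 r1) (arg_input i) (capacity K' n) UNIV (3 * B * DD + 3 * B + 19) (0, M) c"
    using runb_halts[OF r1 halted_end bnd1] by blast
  obtain M2 where r2: "runb (updP 3 rZ) (arg_input i) (capacity K' n) UNIV (B * DD + 9) (0, M) (length (updP 3 rZ), M2)"
    using upd_run[OF iv i, of SE 3 rZ "S - {i}"] by auto
  show "\<exists>c. halts_within (updP 3 rZ) (arg_input i) (capacity K' n) UNIV (3 * B * DD + 3 * B + 19) (0, M) c"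
    using runb_halts[OF r2 halted_end bnd1] by blast
  obtain M3 where r3: "runb TstP (arg_input i) (capacity K' n) UNIV 5 (0, M) (5, M3)" and a3: "M3 0 \<noteq> 0 \<longleftrightarrow> i \<in> S"
    using tst_run[OF iv i] by blast
  have "halted TstP (5, M3)" by (simp add: halted_def TstP_def)
  from runb_halts[OF r3 this, of "3 * B * DD + 3 * B + 19"] a3
  show "\<exists>pc M'. halts_within TstP (arg_input i) (capacity K' n) UNIV (3 * B * DD + 3 * B + 19) (0, M) (pc, M') \<and>
      (M' 0 \<noteq> 0) = (i \<in> S)" by (intro exI[of _ 5] exI[of _ M3]) simp
  obtain M4 where r4: "runb QP (arg_input i) (capacity K' n) UNIV (3 * B * DD + 3 * B + 19) (0, M) (length QP, M4)"
    and a4: "M4 0 \<noteq> 0 \<longleftrightarrow> (\<forall>s\<in>S. i \<le> s)"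
    using qry_run[OF iv i] by blast
  from runb_halts[OF r4 halted_end le_refl] a4
  show "\<exists>pc M'. halts_within QP (arg_input i) (capacity K' n) UNIV (3 * B * DD + 3 * B + 19) (0, M) (pc, M') \<and>
      (M' 0 \<noteq> 0) = (\<forall>s\<in>S. i \<le> s)" by (intro exI[of _ "length QP"] exI[of _ M4]) simp
qed

end

theorem claim7p2:
  assumes "prefix_U1_hypothesis"
  shows "\<not> tractable L1"
proof
  assume "tractable L1"
  then obtain P U E :: "instr list" and B K :: nat where h:
    "\<forall>w. \<exists>c. halts_within P (word_input w) (capacity K (length w)) (main_region B (length w)) (B * (length w + 1)) (0, zero_mem) c"
    "\<forall>w M i a. reach P U B K w M \<and> 1 \<le> i \<and> i \<le> length w \<longrightarrow>
         (\<exists>c. halts_within U (upd_input i a) (capacity K (length w)) (main_region B (length w)) B (0, M) c)"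
    "\<forall>w M. reach P U B K w M \<longrightarrow> enum_ok E (capacity K (length w)) (scratch_region B (length w)) B M (infixes L1 w)"
    unfolding tractable_def by blast
  have tr: "trac P U E B K" using h by (simp add: trac_def)
  from trac.ds_ok[OF tr] assms show False unfolding prefix_U1_hypothesis_def by blast
qed

end
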